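(* Let $B=B_{\mathbb{S}^3_\theta}$ carry the Riemannian structure induced from $\mathbb{R}^4_\theta$ as described in the context, and let $\widetilde f=\tfrac12\sum_{i,j}h_{ij}z^iz^j=\tfrac12(z^1z^3-z^2z^4)$ (a central element of $B$) and $C=B/(\widetilde f)$. Then the $1$-form $\widetilde\nu:=\mathrm{d}_B\widetilde f=\sum_{i,j=1}^4h_{ij}\,z^i\,\mathrm{d}z^j\in\Omega^1_B$ is central and satisfies $[g_B^{-1}(\widetilde\nu\otimes_B\widetilde\nu)]=1$ in $C$; hence $C$ is a noncommutative hypersurface of $B$ (with basis $[\widetilde\nu]$ of $N^1_C$). The projector $\widetilde\Pi:\widetilde q_!(\Omega^1_B)\to\widetilde q_!(\Omega^1_B)$, $[\omega]\mapsto[\omega-g_B^{-1}(\omega\otimes_B\widetilde\nu)\widetilde\nu]$, is given by $\widetilde\Pi(\mathrm{d}z^i)=\mathrm{d}z^i+(-1)^i\,z^i\,\widetilde\nu$.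
   Context: $\theta\in\mathbb{R}$; $R=(R^{ab})$ (row $a$, column $b$) with rows $(1,e^{-i\theta},1,e^{i\theta})$, $(e^{i\theta},1,e^{-i\theta},1)$, $(1,e^{i\theta},1,e^{-i\theta})$, $(e^{-i\theta},1,e^{i\theta},1)$; $A=\mathbb{C}\langle z^1,\dots,z^4\rangle/(z^iz^j-R^{ji}z^jz^i)$; $\Omega^1_A=\bigoplus_iA\,\mathrm{d}z^i$ free left module with $\mathrm{d}z^i\,z^j=R^{ji}z^j\mathrm{d}z^i$, $\mathrm{d}$ Leibniz extension of $z^i\mapsto\mathrm{d}z^i$. $P$ with rows $(0,0,1,0),(0,0,0,1),(1,0,0,0),(0,1,0,0)$, $(g_{ij})=\tfrac12P$, $(g^{ij})=2P$; $(h_{ij})=\tfrac12Q$ with $Q$ having rows $(0,0,1,0),(0,0,0,-1),(1,0,0,0),(0,-1,0,0)$. $B=A/(f)$ with $f=\tfrac12(z^1z^3+z^2z^4-1)$; $\Omega^1_B$ is the quotient of $\Omega^1_A/(f\Omega^1_A+\Omega^1_Af)$ by the $B$-subbimodule generated by $[\mathrm{d}f]$, with $\mathrm{d}_B[a]=[\mathrm{d}a]$ (classes are suppressed in notation). The induced Riemannian structure on $B$ is given by $g_B=\sum g_{ij}\mathrm{d}z^i\otimes_B\mathrm{d}z^j$, inverse metric $g_B^{-1}(\mathrm{d}z^i\otimes_B\mathrm{d}z^j)=g^{ij}-z^iz^j$ (extended as $B$-bimodule map), $\nabla_B(\mathrm{d}z^i)=-z^i\sum g_{kl}\mathrm{d}z^k\otimes_B\mathrm{d}z^l$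 (with left Leibniz rule), $\sigma_B(\mathrm{d}z^i\otimes_B\mathrm{d}z^j)=R^{ji}\mathrm{d}z^j\otimes_B\mathrm{d}z^i$. Hypersurface notions (for an algebra $B$ with calculus $\Omega^1_B$ and inverse metric $g_B^{-1}$): for $C=B/J$, $J$ a two-sided ideal, $\widetilde q:B\to C$, $\widetilde q_!(\Omega^1_B)=\Omega^1_B/(J\Omega^1_B+\Omega^1_BJ)$, $N^1_C$ the $C$-subbimodule generated by $[\mathrm{d}_Ba]$, $a\in J$, $\Omega^1_C=\widetilde q_!(\Omega^1_B)/N^1_C$. $C$ is a (metrically co-orientable) noncommutative hypersurface if $N^1_C$ is free of rank one with basis $[\widetilde\nu]$, $\widetilde\nu\in\Omega^1_B$ central, $[g_B^{-1}(\widetilde\nu\otimes_B\widetilde\nu)]=1\in C$. *)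

theory Defs
  imports Complex_Main
begin

text \<open>The free algebra F = C<z1,...,z4> is represented by coefficient
functions on words (letters 1..4), restricted to the finitely supported ones (FA).
All algebras (A, B, C) and bimodules (Omega^1_A, Omega^1_B, q_!(Omega^1_B), N^1_C)
are represented as quotients of F resp. of F^4 (coefficients of dz^1..dz^4),
i.e. statements in a quotient are stated as membership of a difference of
representatives in the corresponding (generated) ideal / sub-bimodule.\<close>

type_synonym fa = "nat list \<Rightarrow> complex"
type_synonym om = "nat \<Rightarrow> fa"

definition Rm :: "real \<Rightarrow> nat \<Rightarrow> nat \<Rightarrow> complex" where
  "Rm \<theta> a b =
    [[1, cis (-\<theta>), 1, cis \<theta>],
     [cis \<theta>, 1, cis (-\<theta>), 1],
     [1, cis \<theta>, 1, cis (-\<theta>)],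
     [cis (-\<theta>), 1, cis \<theta>, 1]] ! (a - 1) ! (b - 1)"

definition Pm :: "nat \<Rightarrow> nat \<Rightarrow> complex" where
  "Pm a b = (if (a, b) \<in> {(1,3), (3,1), (2,4), (4,2)} then 1 else 0)"

definition Qm :: "nat \<Rightarrow> nat \<Rightarrow> complex" where
  "Qm a b = (if (a, b) \<in> {(1,3), (3,1)} then 1
             else if (a, b) \<in> {(2,4), (4,2)} then -1 else 0)"

definition glow :: "nat \<Rightarrow> nat \<Rightarrow> complex" where "glow a b = Pm a b / 2"
definition gup :: "nat \<Rightarrow> nat \<Rightarrow> complex" where "gup a b = 2 * Pm a b"
definition hlow :: "nat \<Rightarrow> nat \<Rightarrow> complex" where "hlow a b = Qm a b / 2"

definition FA :: "fa set" where
  "FA = {p. finite {w. p w \<noteq> 0} \<and> (\<forall>w. p w \<noteq> 0 \<longrightarrow> set w \<subseteq> {1..4})}"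

definition fzero :: fa where "fzero = (\<lambda>_. 0)"
definition fadd :: "fa \<Rightarrow> fa \<Rightarrow> fa" where "fadd p q = (\<lambda>w. p w + q w)"
definition fsub :: "fa \<Rightarrow> fa \<Rightarrow> fa" where "fsub p q = (\<lambda>w. p w - q w)"
definition fsmul :: "complex \<Rightarrow> fa \<Rightarrow> fa" where "fsmul c p = (\<lambda>w. c * p w)"
definition fmul :: "fa \<Rightarrow> fa \<Rightarrow> fa" where
  "fmul p q = (\<lambda>w. \<Sum>k\<le>length w. p (take k w) * q (drop k w))"
definition mono :: "nat list \<Rightarrow> fa" where "mono w = (\<lambda>v. if v = w then 1 else 0)"
definition fone :: fa where "fone = mono []"
definition zg :: "nat \<Rightarrow> fa" where "zg i = mono [i]"

text \<open>dz^i p = (twist i p) dz^i, from dz^i z^j = R^{ji} z^j dz^i.\<close>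
definition twist :: "real \<Rightarrow> nat \<Rightarrow> fa \<Rightarrow> fa" where
  "twist \<theta> i p = (\<lambda>w. prod_list (map (\<lambda>j. Rm \<theta> j i) w) * p w)"

(* 1-forms: omega = sum_i omega(i) dz^i *)
definition FA4 :: "om set" where
  "FA4 = {\<omega>. (\<forall>i. \<omega> i \<in> FA) \<and> (\<forall>i. i \<notin> {1..4} \<longrightarrow> \<omega> i = fzero)}"

definition ozero :: om where "ozero = (\<lambda>_. fzero)"
definition oadd :: "om \<Rightarrow> om \<Rightarrow> om" where "oadd \<omega> \<eta> = (\<lambda>i. fadd (\<omega> i) (\<eta> i))"
definition osub :: "om \<Rightarrow> om \<Rightarrow> om" where "osub \<omega> \<eta> = (\<lambda>i. fsub (\<omega> i) (\<eta> i))"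
definition olmul :: "fa \<Rightarrow> om \<Rightarrow> om" where "olmul p \<omega> = (\<lambda>i. fmul p (\<omega> i))"
definition ormul :: "real \<Rightarrow> om \<Rightarrow> fa \<Rightarrow> om" where
  "ormul \<theta> \<omega> p = (\<lambda>i. fmul (\<omega> i) (twist \<theta> i p))"
definition dz :: "nat \<Rightarrow> om" where "dz i = (\<lambda>j. if j = i then fone else fzero)"

text \<open>Exterior derivative (Leibniz extension of z^i |-> dz^i), written in the left basis:
d(u z^i s) contributes u (twist i s) dz^i.\<close>
definition dA :: "real \<Rightarrow> fa \<Rightarrow> om" where
  "dA \<theta> p = (\<lambda>i. if i \<in> {1..4} then
      (\<lambda>v. \<Sum>k\<le>length v. p (take k v @ [i] @ drop k v)
                           * prod_list (map (\<lambda>j. Rm \<theta> j i) (drop k v)))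
    else fzero)"

text \<open>Inverse metric g_B^{-1}(omega \<otimes>_B eta), extended as bimodule map:
 omega \<otimes> eta = sum_{ij} omega_i twist_i(eta_j) dz^i \<otimes> dz^j.\<close>
definition ginv :: "real \<Rightarrow> om \<Rightarrow> om \<Rightarrow> fa" where
  "ginv \<theta> \<omega> \<eta> = (\<lambda>w. \<Sum>i\<in>{1..4}. \<Sum>j\<in>{1..4}.
      fmul (\<omega> i) (fmul (twist \<theta> i (\<eta> j)) (fsub (fsmul (gup i j) fone) (fmul (zg i) (zg j)))) w)"

inductive_set ideal_gen :: "fa set \<Rightarrow> fa set" for G where
  gen: "p \<in> G \<Longrightarrow> p \<in> ideal_gen G"
| zero: "fzero \<in> ideal_gen G"
| add: "p \<in> ideal_gen G \<Longrightarrow> q \<in> ideal_gen G \<Longrightarrow> fadd p q \<in> ideal_gen G"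
| lmul: "p \<in> ideal_gen G \<Longrightarrow> a \<in> FA \<Longrightarrow> fmul a p \<in> ideal_gen G"
| rmul: "p \<in> ideal_gen G \<Longrightarrow> a \<in> FA \<Longrightarrow> fmul p a \<in> ideal_gen G"

inductive_set bimod_gen :: "real \<Rightarrow> om set \<Rightarrow> om set" for \<theta> S where
  gen: "x \<in> S \<Longrightarrow> x \<in> bimod_gen \<theta> S"
| zero: "ozero \<in> bimod_gen \<theta> S"
| add: "x \<in> bimod_gen \<theta> S \<Longrightarrow> y \<in> bimod_gen \<theta> S \<Longrightarrow> oadd x y \<in> bimod_gen \<theta> S"
| lmul: "x \<in> bimod_gen \<theta> S \<Longrightarrow> a \<in> FA \<Longrightarrow> olmul a x \<in> bimod_gen \<theta> S"
| rmul: "x \<in> bimod_gen \<theta> S \<Longrightarrow> a \<in> FA \<Longrightarrow> ormul \<theta> x a \<in> bimod_gen \<theta> S"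

definition relsA :: "real \<Rightarrow> fa set" where
  "relsA \<theta> = {fsub (fmul (zg i) (zg j)) (fsmul (Rm \<theta> j i) (fmul (zg j) (zg i))) | i j.
               i \<in> {1..4} \<and> j \<in> {1..4}}"

definition fS :: fa where
  "fS = fsmul (1/2) (fsub (fadd (fmul (zg 1) (zg 3)) (fmul (zg 2) (zg 4))) fone)"

definition ftil :: fa where
  "ftil = (\<lambda>w. \<Sum>i\<in>{1..4}. \<Sum>j\<in>{1..4}. (1/2) * hlow i j * fmul (zg i) (zg j) w)"

(* B = F / JB, C = F / JC (= B/(ftil)) *)
definition JB :: "real \<Rightarrow> fa set" where "JB \<theta> = ideal_gen (relsA \<theta> \<union> {fS})"
definition JC :: "real \<Rightarrow> fa set" where "JC \<theta> = ideal_gen (relsA \<theta> \<union> {fS, ftil})"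

text \<open>Relations J Omega + Omega J for an ideal J (given by its preimage in F).\<close>
definition qrel :: "real \<Rightarrow> fa set \<Rightarrow> om set" where
  "qrel \<theta> J = {olmul p \<omega> | p \<omega>. p \<in> J \<and> \<omega> \<in> FA4} \<union> {ormul \<theta> \<omega> p | p \<omega>. p \<in> J \<and> \<omega> \<in> FA4}"

(* Omega^1_B = F^4 / MB *)
definition MB :: "real \<Rightarrow> om set" where
  "MB \<theta> = bimod_gen \<theta> (qrel \<theta> (JB \<theta>) \<union> {dA \<theta> fS})"

(* q_!(Omega^1_B) = F^4 / MC *)
definition MC :: "real \<Rightarrow> om set" where
  "MC \<theta> = bimod_gen \<theta> (MB \<theta> \<union> qrel \<theta> (JC \<theta>))"

(* N^1_C = NC / MC, the subbimodule generated by [d_B a], a in (ftil) *)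
definition NC :: "real \<Rightarrow> om set" where
  "NC \<theta> = bimod_gen \<theta> (MC \<theta> \<union> {dA \<theta> a | a. a \<in> JC \<theta>})"

definition nu :: "real \<Rightarrow> om" where "nu \<theta> = dA \<theta> ftil"

text \<open>C = B/(ftil) is a (metrically co-orientable) noncommutative hypersurface,
with N^1_C free of rank one (as left C-module) with basis [nu].\<close>
definition nc_hypersurface_basis :: "real \<Rightarrow> om \<Rightarrow> bool" where
  "nc_hypersurface_basis \<theta> \<nu> \<longleftrightarrow>
     \<nu> \<in> FA4
   \<and> (\<forall>p\<in>FA. osub (olmul p \<nu>) (ormul \<theta> \<nu> p) \<in> MB \<theta>)
   \<and> fsub (ginv \<theta> \<nu> \<nu>) fone \<in> JC \<theta>
   \<and> \<nu> \<in> NC \<theta>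
   \<and> (\<forall>n\<in>NC \<theta>. \<exists>c\<in>FA. osub n (olmul c \<nu>) \<in> MC \<theta>)
   \<and> (\<forall>c\<in>FA. olmul c \<nu> \<in> MC \<theta> \<longrightarrow> c \<in> JC \<theta>)"

definition Pi_proj :: "real \<Rightarrow> om \<Rightarrow> om" where
  "Pi_proj \<theta> \<omega> = osub \<omega> (olmul (ginv \<theta> \<omega> (nu \<theta>)) (nu \<theta>))"

end

theory Submission
  imports Defs
begin

lemma fadd_apply: "fadd p q w = p w + q w" by (simp add: fadd_def)
lemma fsub_apply: "fsub p q w = p w - q w" by (simp add: fsub_def)
lemma fsmul_apply: "fsmul c p w = c * p w" by (simp add: fsmul_def)
lemma fzero_apply: "fzero w = 0" by (simp add: fzero_def)
lemmas fapp = fadd_apply fsub_apply fsmul_apply fzero_apply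


lemma fmul_assoc: "fmul (fmul p q) r = fmul p (fmul q r)"
proof (rule ext)
  fix w :: "nat list"
  define n where "n = length w"
  define g where "g i j = p (take i w) * q (take j (drop i w)) * r (drop (i+j) w)" for i j
  have "fmul (fmul p q) r w = (\<Sum>k\<le>n. \<Sum>i\<le>k. g i (k - i))"
    unfolding fmul_def n_def
  proof (intro sum.cong refl)
    fix k assume k: "k \<in> {..length w}"
    have "(\<Sum>i\<le>length (take k w). p (take i (take k w)) * q (drop i (take k w))) * r (drop k w)
       = (\<Sum>i\<le>k. p (take i (take k w)) * q (drop i (take k w)) * r (drop k w))"
      using k by (simp add: fapp sum_distrib_right min_def)
    also have "\<dots> = (\<Sum>i\<le>k. g i (k - i))"
      by (intro sum.cong refl) (simp add: fapp g_def min_def drop_take)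
    finally show "(\<Sum>i\<le>length (take k w). p (take i (take k w)) * q (drop i (take k w))) * r (drop k w) = (\<Sum>i\<le>k. g i (k - i))" .
  qed
  also have "\<dots> = (\<Sum>(i,j)\<in>{(i,j). i+j \<le> n}. g i j)"
    by (rule sum.triangle_reindex_eq[symmetric])
  also have "{(i,j). i+j \<le> n} = Sigma {..n} (\<lambda>i. {..n-i})" by auto
  also have "(\<Sum>(i,j)\<in>Sigma {..n} (\<lambda>i. {..n-i}). g i j) = (\<Sum>i\<le>n. \<Sum>j\<le>n-i. g i j)"
    by (rule sum.Sigma[symmetric]) auto
  also have "\<dots> = fmul p (fmul q r) w"
    unfolding fmul_def n_def
  proof (intro sum.cong refl)
    fix i assume i: "i \<in> {..length w}"
    show "(\<Sum>j\<le>length w - i. g i j) = p (take i w) * (\<Sum>j\<le>length (drop i w). q (take j (drop i w)) * r (drop j (drop i w)))"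
      by (simp add: fapp sum_distrib_left g_def mult.assoc add.commute)
  qed
  finally show "fmul (fmul p q) r w = fmul p (fmul q r) w" .
qed


lemma mono_apply: "mono u w = (if w = u then 1 else 0)" by (simp add: fapp mono_def)

lemma fmul_fadd_left: "fmul (fadd p q) r = fadd (fmul p r) (fmul q r)"
  by (rule ext) (simp add: fapp fmul_def sum.distrib ring_distribs)
lemma fmul_fadd_right: "fmul p (fadd q r) = fadd (fmul p q) (fmul p r)"
  by (rule ext) (simp add: fapp fmul_def sum.distrib ring_distribs)
lemma fmul_fsub_left: "fmul (fsub p q) r = fsub (fmul p r) (fmul q r)"
  by (rule ext) (simp add: fapp fmul_def sum_subtractf ring_distribs)
lemma fmul_fsub_right: "fmul p (fsub q r) = fsub (fmul p q) (fmul p r)"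
  by (rule ext) (simp add: fapp fmul_def sum_subtractf ring_distribs)
lemma fmul_fsmul_left: "fmul (fsmul c p) q = fsmul c (fmul p q)"
  by (rule ext) (simp add: fapp fmul_def sum_distrib_left mult.assoc)
lemma fmul_fsmul_right: "fmul p (fsmul c q) = fsmul c (fmul p q)"
  by (rule ext) (simp add: fapp fmul_def sum_distrib_left mult_ac)
lemma fmul_fzero_left[simp]: "fmul fzero p = fzero"
  by (rule ext) (simp add: fapp fmul_def)
lemma fmul_fzero_right[simp]: "fmul p fzero = fzero"
  by (rule ext) (simp add: fapp fmul_def)

lemma take_drop_eq_iff:
  assumes "k \<le> length w"
  shows "(take k w = u \<and> drop k w = v) \<longleftrightarrow> (k = length u \<and> w = u @ v)"
  using assms by (auto simp: fapp min_def)

lemma mono_mult: "fmul (mono u) (mono v) = mono (u @ v)"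
proof (rule ext)
  fix w
  have "fmul (mono u) (mono v) w = (\<Sum>k\<le>length w. if k = length u \<and> w = u @ v then 1 else 0)"
    unfolding fmul_def mono_def
    by (intro sum.cong refl) (auto simp: fapp min_def)
  also have "\<dots> = mono (u @ v) w"
    by (auto simp: fapp mono_def)
  finally show "fmul (mono u) (mono v) w = mono (u @ v) w" .
qed

lemma fone_mono: "fone = mono []" by (simp add: fapp fone_def)

lemma fmul_fone_left[simp]: "fmul fone p = p"
proof (rule ext)
  fix w
  have "fmul fone p w = (\<Sum>k\<le>length w. if k = 0 then p w else 0)"
    unfolding fmul_def fone_def mono_def by (intro sum.cong refl) auto
  then show "fmul fone p w = p w" by simp
qed

lemma fmul_fone_right[simp]: "fmul p fone = p"
proof (rule ext)
  fix w
  have "fmul p fone w = (\<Sum>k\<le>length w. if k = length w then p w else 0)"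
    unfolding fmul_def fone_def mono_def by (intro sum.cong refl) auto
  then show "fmul p fone w = p w" by simp
qed

lemma fsmul_fsmul[simp]: "fsmul c (fsmul d p) = fsmul (c*d) p" by (rule ext) (simp add: fapp)
lemma fsmul_one[simp]: "fsmul 1 p = p" by (rule ext) (simp add: fapp)
lemma fsmul_zero[simp]: "fsmul 0 p = fzero" by (rule ext) (simp add: fapp)
lemma fsmul_fzero[simp]: "fsmul c fzero = fzero" by (rule ext) (simp add: fapp)
lemma fadd_fzero[simp]: "fadd p fzero = p" "fadd fzero p = p" by (rule ext, simp add: fapp fapp)+
lemma fsub_fzero[simp]: "fsub p fzero = p" by (rule ext, simp add: fapp fapp)

definition supp :: "fa \<Rightarrow> nat list set" where "supp p = {w. p w \<noteq> 0}"

lemma FA_iff: "p \<in> FA \<longleftrightarrow> finite (supp p) \<and> (\<forall>w\<in>supp p. set w \<subseteq> {1..4})"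
  by (auto simp: fapp FA_def supp_def)

lemma FA_subset: "p \<in> FA \<Longrightarrow> supp q \<subseteq> supp p \<Longrightarrow> q \<in> FA"
  by (auto simp: fapp FA_iff intro: finite_subset)

lemma FA_un: "p \<in> FA \<Longrightarrow> q \<in> FA \<Longrightarrow> supp r \<subseteq> supp p \<union> supp q \<Longrightarrow> r \<in> FA"
  by (auto simp: fapp FA_iff intro: finite_subset)

lemma FA_fadd[intro]: "p \<in> FA \<Longrightarrow> q \<in> FA \<Longrightarrow> fadd p q \<in> FA"
  by (rule FA_un[of p q]) (auto simp: fapp supp_def)
lemma FA_fsub[intro]: "p \<in> FA \<Longrightarrow> q \<in> FA \<Longrightarrow> fsub p q \<in> FA"
  by (rule FA_un[of p q]) (auto simp: fapp supp_def)
lemma FA_fsmul[intro]: "p \<in> FA \<Longrightarrow> fsmul c p \<in> FA"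
  by (rule FA_subset[of p]) (auto simp: fapp supp_def)
lemma FA_fzero[intro, simp]: "fzero \<in> FA"
  by (auto simp: fapp FA_def)
lemma FA_mono[intro]: "set u \<subseteq> {1..4} \<Longrightarrow> mono u \<in> FA"
proof -
  assume "set u \<subseteq> {1..4}"
  moreover have "supp (mono u) = {u}" by (auto simp: fapp supp_def mono_def)
  ultimately show ?thesis by (simp add: fapp FA_iff)
qed
lemma FA_fone[intro, simp]: "fone \<in> FA" by (auto simp: fapp fone_def)
lemma FA_zg[intro]: "i \<in> {1..4} \<Longrightarrow> zg i \<in> FA" by (auto simp: fapp zg_def)

lemma supp_fmul: "supp (fmul p q) \<subseteq> (\<lambda>(u,v). u @ v) ` (supp p \<times> supp q)"
proof
  fix w assume "w \<in> supp (fmul p q)"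
  then have "(\<Sum>k\<le>length w. p (take k w) * q (drop k w)) \<noteq> 0" by (simp add: fapp supp_def fmul_def)
  then obtain k where "p (take k w) * q (drop k w) \<noteq> 0" by (metis (no_types, lifting) sum.neutral)
  then have "take k w \<in> supp p" "drop k w \<in> supp q" by (auto simp: fapp supp_def)
  then show "w \<in> (\<lambda>(u,v). u @ v) ` (supp p \<times> supp q)"
    by (intro image_eqI[of _ _ "(take k w, drop k w)"]) auto
qed

lemma FA_fmul[intro]:
  assumes p: "p \<in> FA" and q: "q \<in> FA" shows "fmul p q \<in> FA"
proof -
  have fp: "finite (supp p)" and sp: "\<forall>w\<in>supp p. set w \<subseteq> {1..4}" using p by (simp_all add: FA_iff)
  have fq: "finite (supp q)" and sq: "\<forall>w\<in>supp q. set w \<subseteq> {1..4}" using q by (simp_all add: FA_iff)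
  have "finite (supp (fmul p q))"
  proof -
    have "finite ((\<lambda>(u,v). u @ v) ` (supp p \<times> supp q))" using fp fq by simp
    then show ?thesis using supp_fmul[of p q] by (rule finite_subset[rotated])
  qed
  moreover have "set w \<subseteq> {1..4}" if "w \<in> supp (fmul p q)" for w
  proof -
    have "w \<in> (\<lambda>(u,v). u @ v) ` (supp p \<times> supp q)" using supp_fmul[of p q] that by (rule subsetD)
    then obtain x where x: "x \<in> supp p \<times> supp q" "w = (\<lambda>(u,v). u @ v) x" by (rule imageE)
    obtain u v where "x = (u, v)" by (cases x)
    then have "w = u @ v" "u \<in> supp p" "v \<in> supp q" using x by auto
    then show ?thesis using sp sq by auto
  qed
  ultimately show ?thesis by (simp add: fapp FA_iff)
qed

lemma FA_twist[intro]: "p \<in> FA \<Longrightarrow> twist \<theta> i p \<in> FA"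
  by (rule FA_subset[of p]) (auto simp: fapp supp_def twist_def)

lemma FA_induct[consumes 1, case_names zero add mono]:
  assumes "p \<in> FA" "P fzero"
    and add: "\<And>p q. p \<in> FA \<Longrightarrow> q \<in> FA \<Longrightarrow> P p \<Longrightarrow> P q \<Longrightarrow> P (fadd p q)"
    and mono: "\<And>c w. set w \<subseteq> {1..4} \<Longrightarrow> P (fsmul c (mono w))"
  shows "P p"
proof -
  have fin: "finite (supp p)" using assms(1) by (simp add: fapp FA_iff)
  have "\<forall>p. p \<in> FA \<longrightarrow> supp p \<subseteq> S \<longrightarrow> P p" if "finite S" for S
    using that
  proof (induction S rule: finite_induct)
    case empty
    show ?case
    proof (intro allI impI)
      fix p assume "p \<in> FA" "supp p \<subseteq> {}"
      then have "p = fzero" by (auto simp: fapp supp_def fzero_def fun_eq_iff)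
      then show "P p" using assms(2) by simp
    qed
  next
    case (insert x S)
    show ?case
    proof (intro allI impI)
      fix p assume p: "p \<in> FA" "supp p \<subseteq> insert x S"
      define p' where "p' = p(x := 0)"
      have p'FA: "p' \<in> FA" by (rule FA_subset[OF p(1)]) (auto simp: fapp supp_def p'_def)
      have "supp p' \<subseteq> S" using p by (auto simp: fapp supp_def p'_def)
      then have Pp': "P p'" using insert.IH p'FA by blast
      have eq: "p = fadd (fsmul (p x) (mono x)) p'"
        by (rule ext) (auto simp: fapp p'_def mono_def)
      have m: "P (fsmul (p x) (mono x)) \<and> fsmul (p x) (mono x) \<in> FA"
      proof (cases "p x = 0")
        case True then show ?thesis using assms(2) by simp
      next
        case False
        then have sx: "set x \<subseteq> {1..4}" using p by (auto simp: fapp FA_iff supp_def)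
        show ?thesis using mono[OF sx] FA_fsmul[OF FA_mono[OF sx]] by blast
      qed
      show "P p" using add[of "fsmul (p x) (mono x)" p'] m p'FA Pp' eq by simp
    qed
  qed
  then show ?thesis using fin assms(1) by blast
qed

abbreviation T :: "real \<Rightarrow> nat \<Rightarrow> nat list \<Rightarrow> complex" where
  "T \<theta> i w \<equiv> prod_list (map (\<lambda>j. Rm \<theta> j i) w)"

lemma twist_apply: "twist \<theta> i p w = T \<theta> i w * p w" by (simp add: fapp twist_def)

lemma twist_fmul: "twist \<theta> i (fmul p q) = fmul (twist \<theta> i p) (twist \<theta> i q)"
proof (rule ext)
  fix w
  have e: "T \<theta> i w = T \<theta> i (take k w) * T \<theta> i (drop k w)" for k
    by (metis append_take_drop_id map_append prod_list.append)
  have "twist \<theta> i (fmul p q) w = (\<Sum>k\<le>length w. T \<theta> i w * (p (take k w) * q (drop k w)))"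
    by (simp add: fapp twist_def fmul_def sum_distrib_left)
  also have "\<dots> = (\<Sum>k\<le>length w. (T \<theta> i (take k w) * p (take k w)) * (T \<theta> i (drop k w) * q (drop k w)))"
  proof (intro sum.cong refl)
    fix k show "T \<theta> i w * (p (take k w) * q (drop k w)) = (T \<theta> i (take k w) * p (take k w)) * (T \<theta> i (drop k w) * q (drop k w))"
      by (subst e[of k]) (simp add: fapp mult_ac)
  qed
  finally show "twist \<theta> i (fmul p q) w = fmul (twist \<theta> i p) (twist \<theta> i q) w"
    by (simp add: fapp twist_def fmul_def)
qed
lemma twist_fadd: "twist \<theta> i (fadd p q) = fadd (twist \<theta> i p) (twist \<theta> i q)"
  by (rule ext) (simp add: fapp twist_def ring_distribs)
lemma twist_fsub: "twist \<theta> i (fsub p q) = fsub (twist \<theta> i p) (twist \<theta> i q)"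
  by (rule ext) (simp add: fapp twist_def ring_distribs)
lemma twist_fsmul: "twist \<theta> i (fsmul c p) = fsmul c (twist \<theta> i p)"
  by (rule ext) (simp add: fapp twist_def)
lemma twist_fzero[simp]: "twist \<theta> i fzero = fzero"
  by (rule ext) (simp add: fapp twist_def)
lemma twist_mono: "twist \<theta> i (mono w) = fsmul (T \<theta> i w) (mono w)"
  by (rule ext) (simp add: fapp twist_def mono_def)
lemma twist_fone[simp]: "twist \<theta> i fone = fone"
  by (simp add: fapp fone_def twist_mono)
lemma twist_zg: "twist \<theta> i (zg k) = fsmul (Rm \<theta> k i) (zg k)"
  by (simp add: fapp zg_def twist_mono)

lemma twist_twist_id:
  assumes "p \<in> FA" "\<And>x. x \<in> {1..4} \<Longrightarrow> Rm \<theta> x i * Rm \<theta> x j = 1"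
  shows "twist \<theta> i (twist \<theta> j p) = p"
proof (rule ext)
  fix w
  show "twist \<theta> i (twist \<theta> j p) w = p w"
  proof (cases "p w = 0")
    case False
    then have "set w \<subseteq> {1..4}" using assms(1) by (auto simp: fapp FA_def)
    then have "T \<theta> i w * T \<theta> j w = 1"
      using assms(2) by (induction w) (auto simp: fapp mult_ac)
    then show ?thesis by (simp add: fapp twist_def mult.assoc[symmetric])
  qed (simp add: fapp twist_def)
qed

definition ins :: "nat \<Rightarrow> nat \<Rightarrow> nat list \<Rightarrow> nat list" where
  "ins k i v = take k v @ [i] @ drop k v"

lemma dA_apply: "i \<in> {1..4} \<Longrightarrow> dA \<theta> p i v = (\<Sum>k\<le>length v. p (ins k i v) * T \<theta> i (drop k v))"
  by (simp add: dA_def ins_def)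
lemma dA_out: "i \<notin> {1..4} \<Longrightarrow> dA \<theta> p i = fzero"
  unfolding dA_def by (simp only: if_False)

lemma len_ins[simp]: "length (ins k i v) = Suc (length v)" if "k \<le> length v"
  using that by (simp add: ins_def)
lemma L1: "m \<le> k \<Longrightarrow> k \<le> length v \<Longrightarrow> take m (ins k i v) = take m v"
  by (simp add: ins_def min_def)
lemma L2: "m \<le> k \<Longrightarrow> k \<le> length v \<Longrightarrow> drop m (ins k i v) = ins (k-m) i (drop m v)"
  by (simp add: ins_def drop_take)
lemma L3: "k \<le> m \<Longrightarrow> m \<le> length v \<Longrightarrow> take (Suc m) (ins k i v) = ins k i (take m v)"
  by (simp add: ins_def drop_take min_def Suc_diff_le)
lemma L4: "k \<le> m \<Longrightarrow> m \<le> length v \<Longrightarrow> drop (Suc m) (ins k i v) = drop m v"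
  by (simp add: ins_def min_def Suc_diff_le)
lemma L5: "k \<le> m \<Longrightarrow> T \<theta> i (drop k v) = T \<theta> i (drop k (take m v)) * T \<theta> i (drop m v)"
proof -
  assume "k \<le> m"
  have "drop k v = drop k (take m v @ drop m v)" by simp
  also have "\<dots> = drop k (take m v) @ drop m v"
    unfolding drop_append using \<open>k \<le> m\<close> by (cases "length v \<le> m") (simp_all add: min_def)
  finally have "drop k v = drop k (take m v) @ drop m v" .
  then show ?thesis by (metis map_append prod_list.append)
qed

lemma split_sum_Suc:
  fixes f :: "nat \<Rightarrow> complex"
  assumes "k \<le> n"
  shows "(\<Sum>m\<le>Suc n. f m) = (\<Sum>m\<le>k. f m) + (\<Sum>m\<in>{k..n}. f (Suc m))"
proof -
  have "{..Suc n} = {..k} \<union> Suc ` {k..n}" using assms by (auto simp: image_iff)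
  moreover have "{..k} \<inter> Suc ` {k..n} = {}" by auto
  ultimately have "(\<Sum>m\<le>Suc n. f m) = (\<Sum>m\<le>k. f m) + (\<Sum>m\<in>Suc ` {k..n}. f m)"
    by (simp add: sum.union_disjoint)
  also have "(\<Sum>m\<in>Suc ` {k..n}. f m) = (\<Sum>m\<in>{k..n}. f (Suc m))"
    by (subst sum.reindex) auto
  finally show ?thesis .
qed

lemma leibniz_comp:
  assumes i: "i \<in> {1..4}"
  shows "dA \<theta> (fmul a b) i v = fmul a (dA \<theta> b i) v + fmul (dA \<theta> a i) (twist \<theta> i b) v"
proof -
  define n where "n = length v"
  define X where "X k m = a (take m v) * b (ins (k-m) i (drop m v)) * T \<theta> i (drop k v)" for k m
  define Y where "Y k m = a (ins k i (take m v)) * b (drop m v) * T \<theta> i (drop k v)" for k m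
  have "dA \<theta> (fmul a b) i v = (\<Sum>k\<le>n. \<Sum>m\<le>Suc n. a (take m (ins k i v)) * b (drop m (ins k i v)) * T \<theta> i (drop k v))"
    unfolding dA_apply[OF i] fmul_def n_def
    by (intro sum.cong refl) (simp add: sum_distrib_right del: sum.atMost_Suc)
  also have "\<dots> = (\<Sum>k\<le>n. (\<Sum>m\<le>k. X k m) + (\<Sum>m\<in>{k..n}. Y k m))"
  proof (intro sum.cong refl)
    fix k assume k: "k \<in> {..n}"
    then have kn: "k \<le> n" by simp
    show "(\<Sum>m\<le>Suc n. a (take m (ins k i v)) * b (drop m (ins k i v)) * T \<theta> i (drop k v)) =
          (\<Sum>m\<le>k. X k m) + (\<Sum>m\<in>{k..n}. Y k m)"
      unfolding split_sum_Suc[OF kn]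
    proof (intro arg_cong2[where f="(+)"] sum.cong refl)
      fix m assume "m \<in> {..k}"
      then show "a (take m (ins k i v)) * b (drop m (ins k i v)) * T \<theta> i (drop k v) = X k m"
        using kn by (simp add: X_def L1 L2 n_def)
    next
      fix m assume "m \<in> {k..n}"
      then show "a (take (Suc m) (ins k i v)) * b (drop (Suc m) (ins k i v)) * T \<theta> i (drop k v) = Y k m"
        by (simp add: Y_def L3 L4 n_def)
    qed
  qed
  also have "\<dots> = (\<Sum>k\<le>n. \<Sum>m\<le>k. X k m) + (\<Sum>k\<le>n. \<Sum>m\<in>{k..n}. Y k m)"
    by (simp add: sum.distrib)
  also have "(\<Sum>k\<le>n. \<Sum>m\<le>k. X k m) = fmul a (dA \<theta> b i) v"
  proof -
    define G where "G m j = a (take m v) * b (ins j i (drop m v)) * T \<theta> i (drop (m+j) v)" for m j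
    have "(\<Sum>k\<le>n. \<Sum>m\<le>k. X k m) = (\<Sum>k\<le>n. \<Sum>m\<le>k. G m (k - m))"
      by (intro sum.cong refl) (simp add: X_def G_def)
    also have "\<dots> = (\<Sum>(m,j)\<in>{(m,j). m+j \<le> n}. G m j)"
      by (rule sum.triangle_reindex_eq[symmetric])
    also have "{(m,j). m+j \<le> n} = Sigma {..n} (\<lambda>m. {..n-m})" by auto
    also have "(\<Sum>(m,j)\<in>Sigma {..n} (\<lambda>m. {..n-m}). G m j) = (\<Sum>m\<le>n. \<Sum>j\<le>n-m. G m j)"
      by (rule sum.Sigma[symmetric]) auto
    also have "\<dots> = fmul a (dA \<theta> b i) v"
      unfolding fmul_def dA_apply[OF i] n_def
      by (intro sum.cong refl) (simp add: sum_distrib_left G_def mult.assoc add.commute)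
    finally show ?thesis .
  qed
  also have "(\<Sum>k\<le>n. \<Sum>m\<in>{k..n}. Y k m) = fmul (dA \<theta> a i) (twist \<theta> i b) v"
  proof -
    have "(\<Sum>k\<le>n. \<Sum>m\<in>{k..n}. Y k m) = (\<Sum>k\<in>{..n}. \<Sum>m\<in>{m. m \<in> {..n} \<and> k \<le> m}. Y k m)"
      by (rule sum.cong[OF refl], rule sum.cong) auto
    also have "\<dots> = (\<Sum>m\<in>{..n}. \<Sum>k\<in>{k. k \<in> {..n} \<and> k \<le> m}. Y k m)"
      by (rule sum.swap_restrict) auto
    also have "\<dots> = (\<Sum>m\<le>n. \<Sum>k\<le>m. Y k m)"
      by (rule sum.cong[OF refl], rule sum.cong) auto
    also have "\<dots> = fmul (dA \<theta> a i) (twist \<theta> i b) v"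
      unfolding fmul_def dA_apply[OF i] n_def twist_apply
    proof (intro sum.cong refl)
      fix m assume m: "m \<in> {..length v}"
      show "(\<Sum>k\<le>m. Y k m) = (\<Sum>k\<le>length (take m v). a (ins k i (take m v)) * T \<theta> i (drop k (take m v))) *
         (T \<theta> i (drop m v) * b (drop m v))"
      proof -
        have lm: "length (take m v) = m" using m by simp
        show ?thesis unfolding lm sum_distrib_right
        proof (rule sum.cong[OF refl])
          fix k assume "k \<in> {..m}"
          then have "T \<theta> i (drop k v) = T \<theta> i (drop k (take m v)) * T \<theta> i (drop m v)"
            by (intro L5) simp
          then show "Y k m = a (ins k i (take m v)) * T \<theta> i (drop k (take m v)) * (T \<theta> i (drop m v) * b (drop m v))"
            unfolding Y_def by (simp only: mult_ac)
        qed
      qed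
    qed
    finally show ?thesis .
  qed
  finally show ?thesis .
qed

lemma leibniz: "dA \<theta> (fmul a b) = oadd (olmul a (dA \<theta> b)) (ormul \<theta> (dA \<theta> a) b)"
proof (rule ext)+
  fix i v
  show "dA \<theta> (fmul a b) i v = oadd (olmul a (dA \<theta> b)) (ormul \<theta> (dA \<theta> a) b) i v"
  proof (cases "i \<in> {1..4}")
    case True then show ?thesis by (simp add: fapp leibniz_comp oadd_def olmul_def ormul_def)
  next
    case False then show ?thesis by (simp add: fapp dA_out oadd_def olmul_def ormul_def)
  qed
qed

lemma ideal_fsmul: "p \<in> ideal_gen G \<Longrightarrow> fsmul c p \<in> ideal_gen G"
  using ideal_gen.lmul[of p G "fsmul c fone"] by (simp add: fmul_fsmul_left FA_fsmul)

lemma fsub_as_add: "fsub p q = fadd p (fsmul (-1) q)" by (rule ext) (simp add: fapp)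

lemma ideal_fsub: "p \<in> ideal_gen G \<Longrightarrow> q \<in> ideal_gen G \<Longrightarrow> fsub p q \<in> ideal_gen G"
  unfolding fsub_as_add by (intro ideal_gen.add ideal_fsmul)

lemma ideal_gen_mono: "G \<subseteq> G' \<Longrightarrow> p \<in> ideal_gen G \<Longrightarrow> p \<in> ideal_gen G'"
proof -
  assume s: "G \<subseteq> G'"
  show "p \<in> ideal_gen G \<Longrightarrow> p \<in> ideal_gen G'"
    by (induction rule: ideal_gen.induct) (use s in \<open>auto intro: ideal_gen.intros\<close>)
qed

lemma ideal_FA: "G \<subseteq> FA \<Longrightarrow> p \<in> ideal_gen G \<Longrightarrow> p \<in> FA"
proof -
  assume s: "G \<subseteq> FA"
  show "p \<in> ideal_gen G \<Longrightarrow> p \<in> FA"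
    by (induction rule: ideal_gen.induct) (use s in auto)
qed

lemma fsub_self[simp]: "fsub p p = fzero" by (rule ext) (simp add: fapp)

lemma cong_refl: "fsub p p \<in> ideal_gen G" by (simp add: ideal_gen.zero)

lemma cong_trans: "fsub x y \<in> ideal_gen G \<Longrightarrow> fsub y z \<in> ideal_gen G \<Longrightarrow> fsub x z \<in> ideal_gen G"
proof -
  assume a: "fsub x y \<in> ideal_gen G" "fsub y z \<in> ideal_gen G"
  have "fsub x z = fadd (fsub x y) (fsub y z)" by (rule ext) (simp add: fapp)
  then show ?thesis using a by (simp add: ideal_gen.add)
qed

lemma cong_sym: "fsub x y \<in> ideal_gen G \<Longrightarrow> fsub y x \<in> ideal_gen G"
proof -
  assume a: "fsub x y \<in> ideal_gen G"
  have "fsub y x = fsmul (-1) (fsub x y)" by (rule ext) (simp add: fapp)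
  then show ?thesis using a by (simp add: ideal_fsmul)
qed

lemma cong_lmul: "fsub x y \<in> ideal_gen G \<Longrightarrow> a \<in> FA \<Longrightarrow> fsub (fmul a x) (fmul a y) \<in> ideal_gen G"
  by (simp add: fmul_fsub_right[symmetric] ideal_gen.lmul)

lemma cong_rmul: "fsub x y \<in> ideal_gen G \<Longrightarrow> a \<in> FA \<Longrightarrow> fsub (fmul x a) (fmul y a) \<in> ideal_gen G"
  by (simp add: fmul_fsub_left[symmetric] ideal_gen.rmul)

lemma cong_add: "fsub x y \<in> ideal_gen G \<Longrightarrow> fsub x' y' \<in> ideal_gen G \<Longrightarrow> fsub (fadd x x') (fadd y y') \<in> ideal_gen G"
proof -
  assume a: "fsub x y \<in> ideal_gen G" "fsub x' y' \<in> ideal_gen G"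
  have "fsub (fadd x x') (fadd y y') = fadd (fsub x y) (fsub x' y')" by (rule ext) (simp add: fapp)
  then show ?thesis using a by (simp add: ideal_gen.add)
qed

lemma cong_smul: "fsub x y \<in> ideal_gen G \<Longrightarrow> fsub (fsmul c x) (fsmul c y) \<in> ideal_gen G"
proof -
  assume a: "fsub x y \<in> ideal_gen G"
  have "fsub (fsmul c x) (fsmul c y) = fsmul c (fsub x y)" by (rule ext) (simp add: fapp ring_distribs)
  then show ?thesis using a by (simp add: ideal_fsmul)
qed

lemma cong_eq: "x = y \<Longrightarrow> fsub x y \<in> ideal_gen G" by (simp add: ideal_gen.zero)

lemma ideal_sum_mem: "fsub x y \<in> ideal_gen G \<Longrightarrow> y \<in> ideal_gen G \<Longrightarrow> x \<in> ideal_gen G"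
proof -
  assume a: "fsub x y \<in> ideal_gen G" "y \<in> ideal_gen G"
  have "x = fadd (fsub x y) y" by (rule ext) (simp add: fapp)
  then show ?thesis using a by (metis ideal_gen.add)
qed

definition PL :: "(complex \<times> nat list) list \<Rightarrow> fa" where
  "PL xs = (\<lambda>w. sum_list (map (\<lambda>(c,u). if u = w then c else 0) xs))"

definition pmul :: "(complex \<times> nat list) list \<Rightarrow> (complex \<times> nat list) list \<Rightarrow> (complex \<times> nat list) list" where
  "pmul xs ys = concat (map (\<lambda>(c,u). map (\<lambda>(d,v). (c*d, u@v)) ys) xs)"
definition psm :: "complex \<Rightarrow> (complex \<times> nat list) list \<Rightarrow> (complex \<times> nat list) list" where
  "psm c xs = map (\<lambda>(d,u). (c*d,u)) xs"
definition ptw :: "real \<Rightarrow> nat \<Rightarrow> (complex \<times> nat list) list \<Rightarrow> (complex \<times> nat list) list" where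
  "ptw \<theta> i xs = map (\<lambda>(c,u). (T \<theta> i u * c, u)) xs"

lemma pmul_simps[simp]: "pmul [] ys = []" "pmul ((c,u)#xs) ys = map (\<lambda>(d,v). (c*d, u@v)) ys @ pmul xs ys"
  by (simp_all add: pmul_def)
lemma psm_simps[simp]: "psm c [] = []" "psm c ((d,u)#xs) = (c*d,u) # psm c xs"
  by (simp_all add: psm_def)
lemma ptw_simps[simp]: "ptw \<theta> i [] = []" "ptw \<theta> i ((c,u)#xs) = (T \<theta> i u * c, u) # ptw \<theta> i xs"
  by (simp_all add: ptw_def)

lemma PL_Nil: "PL [] = fzero" by (rule ext) (simp add: fapp PL_def)
lemma PL_Cons: "PL ((c,u)#xs) = fadd (fsmul c (mono u)) (PL xs)"
  by (rule ext) (simp add: fapp PL_def mono_def)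
lemma PL_append: "PL (xs @ ys) = fadd (PL xs) (PL ys)"
  by (rule ext) (simp add: fapp PL_def)
lemma PL_add: "fadd (PL xs) (PL ys) = PL (xs @ ys)"
  by (simp add: PL_append)
lemma PL_single: "PL [(c,u)] = fsmul c (mono u)"
  by (simp add: PL_Cons PL_Nil)

lemma PL_smul: "fsmul c (PL xs) = PL (psm c xs)"
  by (induction xs) (auto simp: fapp PL_Nil PL_Cons fun_eq_iff ring_distribs)

lemma PL_sub: "fsub (PL xs) (PL ys) = PL (xs @ psm (-1) ys)"
  by (simp add: PL_append PL_smul[symmetric] fsub_as_add)

lemma PL_twist: "twist \<theta> i (PL xs) = PL (ptw \<theta> i xs)"
  by (induction xs) (auto simp: PL_Nil PL_Cons twist_fadd twist_fsmul twist_mono mult.commute)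

lemma PL_mul_single: "fmul (fsmul c (mono u)) (PL ys) = PL (map (\<lambda>(d,v). (c*d, u@v)) ys)"
proof (induction ys)
  case Nil then show ?case by (simp add: PL_Nil)
next
  case (Cons y ys)
  obtain d v where y: "y = (d,v)" by (cases y)
  show ?case using Cons
    by (simp add: y PL_Cons fmul_fadd_right fmul_fsmul_left fmul_fsmul_right mono_mult mult.commute)
qed

lemma PL_mul: "fmul (PL xs) (PL ys) = PL (pmul xs ys)"
proof (induction xs)
  case Nil then show ?case by (simp add: PL_Nil)
next
  case (Cons x xs)
  obtain c u where x: "x = (c,u)" by (cases x)
  show ?case using Cons by (simp add: x PL_Cons fmul_fadd_left PL_mul_single PL_append)
qed

lemma mono_PL: "mono u = PL [(1,u)]" by (simp add: PL_single)
lemma zg_PL: "zg i = PL [(1,[i])]" by (simp add: zg_def PL_single)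
lemma fone_PL: "fone = PL [(1,[])]" by (simp add: fone_def PL_single)
lemma fzero_PL: "fzero = PL []" by (simp add: PL_Nil)

lemma PL_out: "w \<notin> snd ` set xs \<Longrightarrow> PL xs w = 0"
  by (induction xs) (auto simp: PL_def)

lemma PL_eqI:
  assumes "\<forall>w \<in> set (map snd xs @ map snd ys). PL xs w = PL ys w"
  shows "PL xs = PL ys"
proof (rule ext)
  fix w
  show "PL xs w = PL ys w"
  proof (cases "w \<in> set (map snd xs @ map snd ys)")
    case True then show ?thesis using assms by blast
  next
    case False then show ?thesis by (simp add: PL_out)
  qed
qed

lemma PL_FA: "\<forall>(c,u) \<in> set xs. set u \<subseteq> {1..4} \<Longrightarrow> PL xs \<in> FA"
proof (induction xs)
  case Nil then show ?case by (simp add: PL_Nil)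
next
  case (Cons x xs)
  obtain c u where x: "x = (c,u)" by (cases x)
  show ?case using Cons by (auto simp: x PL_Cons intro!: FA_fadd FA_fsmul FA_mono)
qed

definition witL :: "(complex \<times> nat list \<times> fa \<times> nat list) list \<Rightarrow> fa" where
  "witL ws = foldr (\<lambda>(c,u,g,v) acc. fadd (fsmul c (fmul (mono u) (fmul g (mono v)))) acc) ws fzero"

lemma witL_simps: "witL [] = fzero" "witL ((c,u,g,v)#ws) = fadd (fsmul c (fmul (mono u) (fmul g (mono v)))) (witL ws)"
  by (simp_all add: witL_def)

lemma witL_in:
  "\<forall>(c,u,g,v) \<in> set ws. g \<in> ideal_gen G \<and> set u \<subseteq> {1..4} \<and> set v \<subseteq> {1..4} \<Longrightarrow> witL ws \<in> ideal_gen G"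
proof (induction ws)
  case Nil then show ?case by (simp add: witL_simps ideal_gen.zero)
next
  case (Cons x ws)
  obtain c u g v where x: "x = (c,u,g,v)" by (cases x)
  have "g \<in> ideal_gen G" "set u \<subseteq> {1..4}" "set v \<subseteq> {1..4}" using Cons.prems x by auto
  then have "fmul (mono u) (fmul g (mono v)) \<in> ideal_gen G"
    by (intro ideal_gen.lmul ideal_gen.rmul FA_mono)
  then show ?case using Cons by (simp add: x witL_simps ideal_gen.add ideal_fsmul)
qed

lemma cm: "cis (-\<theta>) = 1 / cis \<theta>" using cis_divide[of 0 \<theta>] by simp

lemma Rm_tab:
  "Rm \<theta> 1 1 = 1" "Rm \<theta> 1 2 = 1 / cis \<theta>" "Rm \<theta> 1 3 = 1" "Rm \<theta> 1 4 = cis \<theta>"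
  "Rm \<theta> 2 1 = cis \<theta>" "Rm \<theta> 2 2 = 1" "Rm \<theta> 2 3 = 1 / cis \<theta>" "Rm \<theta> 2 4 = 1"
  "Rm \<theta> 3 1 = 1" "Rm \<theta> 3 2 = cis \<theta>" "Rm \<theta> 3 3 = 1" "Rm \<theta> 3 4 = 1 / cis \<theta>"
  "Rm \<theta> 4 1 = 1 / cis \<theta>" "Rm \<theta> 4 2 = 1" "Rm \<theta> 4 3 = cis \<theta>" "Rm \<theta> 4 4 = 1"
  by (simp_all add: Rm_def cm numeral_eq_Suc)

lemmas Rm_tabS = Rm_tab[unfolded One_nat_def]
lemmas Rm_all = Rm_tab Rm_tabS(1-4,5,9,13)

lemma atLeast1_4: "{1..4::nat} = {1,2,3,4}" by auto

lemma Rm_inv: "a \<in> {1..4} \<Longrightarrow> b \<in> {1..4} \<Longrightarrow> Rm \<theta> a b * Rm \<theta> b a = 1"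
  unfolding atLeast1_4 by (auto simp: Rm_all)

definition relA :: "real \<Rightarrow> nat \<Rightarrow> nat \<Rightarrow> fa" where
  "relA \<theta> a b = PL [(1,[a,b]), (- Rm \<theta> b a, [b,a])]"

lemma relA_rels: "a \<in> {1..4} \<Longrightarrow> b \<in> {1..4} \<Longrightarrow> relA \<theta> a b \<in> relsA \<theta>"
proof -
  assume ab: "a \<in> {1..4}" "b \<in> {1..4}"
  have "relA \<theta> a b = fsub (fmul (zg a) (zg b)) (fsmul (Rm \<theta> b a) (fmul (zg b) (zg a)))"
    by (simp add: relA_def zg_PL PL_mul PL_smul PL_sub)
  then show ?thesis using ab unfolding relsA_def by blast
qed

definition fSL :: "(complex \<times> nat list) list" where
  "fSL = [(1/2,[1,3]), (1/2,[2,4]), (-1/2,[])]"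
definition ftilL :: "(complex \<times> nat list) list" where
  "ftilL = [(1/4,[1,3]), (1/4,[3,1]), (-1/4,[2,4]), (-1/4,[4,2])]"

lemma fS_PL: "fS = PL fSL"
  by (simp add: fS_def fSL_def zg_PL fone_PL PL_mul PL_smul PL_sub PL_add)

lemma ftil_PL: "ftil = PL ftilL"
proof (rule ext)
  fix w
  show "ftil w = PL ftilL w"
    unfolding ftil_def atLeast1_4
    by (simp add: zg_def mono_mult mono_apply hlow_def Qm_def ftilL_def PL_def)
qed

lemma JB_sub_JC: "JB \<theta> \<subseteq> JC \<theta>"
  unfolding JB_def JC_def by (auto intro: ideal_gen_mono[rotated])

lemma relA_JB: "a \<in> {1..4} \<Longrightarrow> b \<in> {1..4} \<Longrightarrow> relA \<theta> a b \<in> JB \<theta>"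
  unfolding JB_def by (rule ideal_gen.gen) (simp add: relA_rels)
lemma relA_JC: "a \<in> {1..4} \<Longrightarrow> b \<in> {1..4} \<Longrightarrow> relA \<theta> a b \<in> JC \<theta>"
  unfolding JC_def by (rule ideal_gen.gen) (simp add: relA_rels)
lemma fS_JB: "fS \<in> JB \<theta>" unfolding JB_def by (rule ideal_gen.gen) simp
lemma fS_JC: "fS \<in> JC \<theta>" unfolding JC_def by (rule ideal_gen.gen) simp
lemma ftil_JC: "ftil \<in> JC \<theta>" unfolding JC_def by (rule ideal_gen.gen) simp

lemma relsA_FA: "relsA \<theta> \<subseteq> FA"
  unfolding relsA_def by (auto intro!: FA_fsub FA_fmul FA_fsmul FA_zg)
lemma fS_FA: "fS \<in> FA" unfolding fS_PL fSL_def by (rule PL_FA) auto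
lemma ftil_FA: "ftil \<in> FA" unfolding ftil_PL ftilL_def by (rule PL_FA) auto

lemma JB_FA: "JB \<theta> \<subseteq> FA"
  unfolding JB_def using relsA_FA fS_FA by (auto intro: ideal_FA[rotated])
lemma JC_FA: "JC \<theta> \<subseteq> FA"
  unfolding JC_def using relsA_FA fS_FA ftil_FA by (auto intro: ideal_FA[rotated])

lemma oapp: "oadd x y i = fadd (x i) (y i)" "osub x y i = fsub (x i) (y i)"
  "olmul a x i = fmul a (x i)" "ormul \<theta> x a i = fmul (x i) (twist \<theta> i a)" "ozero i = fzero"
  "dz k i = (if i = k then fone else fzero)"
  by (simp_all add: oadd_def osub_def olmul_def ormul_def ozero_def dz_def)

lemma olmul_olmul: "olmul a (olmul b x) = olmul (fmul a b) x"
  by (rule ext) (simp add: oapp fmul_assoc)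
lemma ormul_ormul: "ormul \<theta> (ormul \<theta> x a) b = ormul \<theta> x (fmul a b)"
  by (rule ext) (simp add: oapp fmul_assoc twist_fmul)
lemma ormul_olmul: "ormul \<theta> (olmul a x) b = olmul a (ormul \<theta> x b)"
  by (rule ext) (simp add: oapp fmul_assoc)
lemma olmul_oadd: "olmul a (oadd x y) = oadd (olmul a x) (olmul a y)"
  by (rule ext) (simp add: oapp fmul_fadd_right)
lemma olmul_osub: "olmul a (osub x y) = osub (olmul a x) (olmul a y)"
  by (rule ext) (simp add: oapp fmul_fsub_right)
lemma ormul_oadd: "ormul \<theta> (oadd x y) a = oadd (ormul \<theta> x a) (ormul \<theta> y a)"
  by (rule ext) (simp add: oapp fmul_fadd_left)
lemma ormul_osub: "ormul \<theta> (osub x y) a = osub (ormul \<theta> x a) (ormul \<theta> y a)"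
  by (rule ext) (simp add: oapp fmul_fsub_left)
lemma olmul_fadd: "olmul (fadd a b) x = oadd (olmul a x) (olmul b x)"
  by (rule ext) (simp add: oapp fmul_fadd_left)
lemma olmul_fsub: "olmul (fsub a b) x = osub (olmul a x) (olmul b x)"
  by (rule ext) (simp add: oapp fmul_fsub_left)
lemma olmul_fzero: "olmul fzero x = ozero"
  by (rule ext) (simp add: oapp)
lemma osub_ozero: "osub x ozero = x"
  by (rule ext) (simp add: oapp)
lemma ozero_fun: "ozero = (\<lambda>_. fzero)" by (simp add: ozero_def)

lemma bimod_sub: "x \<in> bimod_gen \<theta> S \<Longrightarrow> y \<in> bimod_gen \<theta> S \<Longrightarrow> osub x y \<in> bimod_gen \<theta> S"
proof -
  assume a: "x \<in> bimod_gen \<theta> S" "y \<in> bimod_gen \<theta> S"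
  have "osub x y = oadd x (olmul (fsmul (-1) fone) y)"
    by (rule ext)+ (simp add: oapp fapp fmul_fsmul_left)
  then show ?thesis using a by (simp add: bimod_gen.add bimod_gen.lmul FA_fsmul)
qed

lemma bimod_gen_mono: "S \<subseteq> S' \<Longrightarrow> x \<in> bimod_gen \<theta> S \<Longrightarrow> x \<in> bimod_gen \<theta> S'"
proof -
  assume s: "S \<subseteq> S'"
  show "x \<in> bimod_gen \<theta> S \<Longrightarrow> x \<in> bimod_gen \<theta> S'"
    by (induction rule: bimod_gen.induct) (use s in \<open>auto intro: bimod_gen.intros\<close>)
qed

lemma MB_MC: "x \<in> MB \<theta> \<Longrightarrow> x \<in> MC \<theta>"
  unfolding MC_def by (rule bimod_gen.gen) simp

lemma qrelC_MC: "p \<in> JC \<theta> \<Longrightarrow> \<omega> \<in> FA4 \<Longrightarrow> olmul p \<omega> \<in> MC \<theta>"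
  "p \<in> JC \<theta> \<Longrightarrow> \<omega> \<in> FA4 \<Longrightarrow> ormul \<theta> \<omega> p \<in> MC \<theta>"
  unfolding MC_def qrel_def by (rule bimod_gen.gen, blast)+

lemma qrelB_MB: "p \<in> JB \<theta> \<Longrightarrow> \<omega> \<in> FA4 \<Longrightarrow> olmul p \<omega> \<in> MB \<theta>"
  "p \<in> JB \<theta> \<Longrightarrow> \<omega> \<in> FA4 \<Longrightarrow> ormul \<theta> \<omega> p \<in> MB \<theta>"
  unfolding MB_def qrel_def by (rule bimod_gen.gen, blast)+

lemma dfS_MB: "dA \<theta> fS \<in> MB \<theta>"
  unfolding MB_def by (rule bimod_gen.gen) simp

lemma FA4I: "(\<And>i. i \<in> {1..4} \<Longrightarrow> \<omega> i \<in> FA) \<Longrightarrow> (\<And>i. i \<notin> {1..4} \<Longrightarrow> \<omega> i = fzero) \<Longrightarrow> \<omega> \<in> FA4"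
proof -
  assume a: "\<And>i. i \<in> {1..4} \<Longrightarrow> \<omega> i \<in> FA" "\<And>i. i \<notin> {1..4} \<Longrightarrow> \<omega> i = fzero"
  have "\<omega> i \<in> FA" for i by (cases "i \<in> {1..4}") (simp_all add: a)
  then show ?thesis unfolding FA4_def using a(2) by blast
qed
lemma FA4D: "\<omega> \<in> FA4 \<Longrightarrow> \<omega> i \<in> FA" "\<omega> \<in> FA4 \<Longrightarrow> i \<notin> {1..4} \<Longrightarrow> \<omega> i = fzero"
  unfolding FA4_def by auto

lemma FA4_oadd: "x \<in> FA4 \<Longrightarrow> y \<in> FA4 \<Longrightarrow> oadd x y \<in> FA4"
  by (rule FA4I) (auto simp: oapp FA4D intro: FA_fadd)
lemma FA4_osub: "x \<in> FA4 \<Longrightarrow> y \<in> FA4 \<Longrightarrow> osub x y \<in> FA4"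
  by (rule FA4I) (auto simp: oapp FA4D intro: FA_fsub)
lemma FA4_olmul: "a \<in> FA \<Longrightarrow> x \<in> FA4 \<Longrightarrow> olmul a x \<in> FA4"
  by (rule FA4I) (auto simp: oapp FA4D intro: FA_fmul)
lemma FA4_ormul: "a \<in> FA \<Longrightarrow> x \<in> FA4 \<Longrightarrow> ormul \<theta> x a \<in> FA4"
  by (rule FA4I) (auto simp: oapp FA4D intro: FA_fmul FA_twist)
lemma FA4_ozero: "ozero \<in> FA4"
  by (rule FA4I) (auto simp: oapp)
lemma FA4_dz: "k \<in> {1..4} \<Longrightarrow> dz k \<in> FA4"
  by (rule FA4I) (auto simp: oapp)

lemma dA_fadd: "dA \<theta> (fadd p q) = oadd (dA \<theta> p) (dA \<theta> q)"
proof (rule ext)+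
  fix i v
  show "dA \<theta> (fadd p q) i v = oadd (dA \<theta> p) (dA \<theta> q) i v"
    by (cases "i \<in> {1..4}") (simp_all add: oapp fapp dA_apply dA_out ring_distribs sum.distrib)
qed

lemma dA_fsmul: "dA \<theta> (fsmul c p) i = fsmul c (dA \<theta> p i)"
proof (rule ext)
  fix v
  show "dA \<theta> (fsmul c p) i v = fsmul c (dA \<theta> p i) v"
    by (cases "i \<in> {1..4}") (simp_all add: fapp dA_apply dA_out sum_distrib_left mult.assoc)
qed

lemma dA_fzero: "dA \<theta> fzero = ozero"
proof (rule ext)+
  fix i v
  show "dA \<theta> fzero i v = ozero i v"
    by (cases "i \<in> {1..4}") (simp_all add: oapp fapp dA_apply dA_out)
qed

lemma ins_ne: "ins k i v \<noteq> []" by (simp add: ins_def)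

lemma dA_mono_Nil: "dA \<theta> (mono []) = ozero"
proof (rule ext)+
  fix i v
  show "dA \<theta> (mono []) i v = ozero i v"
    by (cases "i \<in> {1..4}") (simp_all add: oapp fapp dA_apply dA_out mono_apply ins_ne)
qed

lemma dA_zg: "k \<in> {1..4} \<Longrightarrow> dA \<theta> (zg k) = dz k"
proof (rule ext)+
  fix i v assume k: "k \<in> {1..4}"
  show "dA \<theta> (zg k) i v = dz k i v"
  proof (cases "i \<in> {1..4}")
    case True
    have "dA \<theta> (zg k) i v = (\<Sum>j\<le>length v. if j = 0 \<and> v = [] \<and> i = k then 1 else 0)"
      unfolding dA_apply[OF True] zg_def
    proof (rule sum.cong[OF refl])
      fix j assume j: "j \<in> {..length v}"
      show "mono [k] (ins j i v) * T \<theta> i (drop j v) = (if j = 0 \<and> v = [] \<and> i = k then 1 else 0)"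
      proof (cases "ins j i v = [k]")
        case True
        then have "v = []" "i = k" using j by (auto simp: ins_def append_eq_Cons_conv)
        then show ?thesis using True j by (simp add: mono_apply)
      next
        case False
        then have "\<not> (j = 0 \<and> v = [] \<and> i = k)" by (auto simp: ins_def)
        then show ?thesis using False by (simp add: mono_apply)
      qed
    qed
    also have "\<dots> = dz k i v"
      by (auto simp: oapp fone_def mono_apply fapp)
    finally show ?thesis .
  next
    case False
    then have "i \<noteq> k" using k by auto
    then show ?thesis using False by (simp add: oapp dA_out)
  qed
qed

lemma mono_Cons: "mono (k#w) = fmul (zg k) (mono w)"
  by (simp add: zg_def mono_mult)

lemma dA_mono_Cons: "k \<in> {1..4} \<Longrightarrow>
  dA \<theta> (mono (k#w)) i = fadd (fmul (zg k) (dA \<theta> (mono w) i)) (fmul (dz k i) (twist \<theta> i (mono w)))"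
  by (simp add: mono_Cons leibniz oapp dA_zg)

fun dL :: "real \<Rightarrow> nat \<Rightarrow> nat list \<Rightarrow> (complex \<times> nat list) list" where
  "dL \<theta> i [] = []"
| "dL \<theta> i (k#w) = map (\<lambda>(c,u). (c, k#u)) (dL \<theta> i w) @ (if i = k then [(T \<theta> i w, w)] else [])"

lemma dA_mono_PL: "set w \<subseteq> {1..4} \<Longrightarrow> dA \<theta> (mono w) i = PL (dL \<theta> i w)"
proof (induction w)
  case Nil then show ?case by (simp add: dA_mono_Nil oapp PL_Nil)
next
  case (Cons k w)
  then have k: "k \<in> {1..4}" and w: "set w \<subseteq> {1..4}" by auto
  have "fmul (zg k) (PL (dL \<theta> i w)) = PL (map (\<lambda>(c,u). (c, k#u)) (dL \<theta> i w))"
    by (simp add: zg_PL PL_mul pmul_def case_prod_beta)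
  moreover have "fmul (dz k i) (twist \<theta> i (mono w)) = PL (if i = k then [(T \<theta> i w, w)] else [])"
    by (simp add: oapp twist_mono PL_single PL_Nil)
  ultimately show ?case using Cons.IH[OF w] by (simp add: dA_mono_Cons[OF k] PL_add)
qed

definition dPL :: "real \<Rightarrow> nat \<Rightarrow> (complex \<times> nat list) list \<Rightarrow> (complex \<times> nat list) list" where
  "dPL \<theta> i xs = concat (map (\<lambda>(c,u). psm c (dL \<theta> i u)) xs)"

lemma dPL_simps[simp]: "dPL \<theta> i [] = []" "dPL \<theta> i ((c,u)#xs) = psm c (dL \<theta> i u) @ dPL \<theta> i xs"
  by (simp_all add: dPL_def)

lemma dA_PL: "\<forall>(c,u)\<in>set xs. set u \<subseteq> {1..4} \<Longrightarrow> dA \<theta> (PL xs) i = PL (dPL \<theta> i xs)"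
proof (induction xs)
  case Nil then show ?case by (simp add: PL_Nil dA_fzero oapp)
next
  case (Cons x xs)
  obtain c u where x: "x = (c,u)" by (cases x)
  then show ?case using Cons
    by (simp add: PL_Cons dA_fadd oapp dA_fsmul dA_mono_PL PL_smul PL_add)
qed

lemma dL_words: "(c,u) \<in> set (dL \<theta> i w) \<Longrightarrow> set u \<subseteq> set w"
  by (induction w arbitrary: c u) (fastforce split: if_splits)+

lemma FA4_dA: "p \<in> FA \<Longrightarrow> dA \<theta> p \<in> FA4"
proof (induction rule: FA_induct)
  case zero then show ?case by (simp add: dA_fzero FA4_ozero)
next
  case (add p q) then show ?case by (simp add: dA_fadd FA4_oadd)
next
  case (mono c w)
  show ?case
  proof (rule FA4I)
    fix i :: nat
    have "PL (dL \<theta> i w) \<in> FA"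
      using mono dL_words by (intro PL_FA) fastforce
    then show "dA \<theta> (fsmul c (mono w)) i \<in> FA"
      by (simp add: dA_fsmul dA_mono_PL[OF mono] FA_fsmul)
  next
    fix i :: nat assume "i \<notin> {1..4}"
    then show "dA \<theta> (fsmul c (mono w)) i = fzero" by (simp add: dA_out)
  qed
qed

lemma ftilL_words: "\<forall>(c,u)\<in>set ftilL. set u \<subseteq> {1..4}" by (simp add: ftilL_def)
lemma fSL_words: "\<forall>(c,u)\<in>set fSL. set u \<subseteq> {1..4}" by (simp add: fSL_def)

lemma nu_PL: "nu \<theta> i = PL (dPL \<theta> i ftilL)"
  unfolding nu_def ftil_PL by (rule dA_PL[OF ftilL_words])

lemma nu1: "nu \<theta> 1 = PL [(1/2,[3])]"
  unfolding nu_PL by (rule PL_eqI) (simp add: ftilL_def PL_def Rm_all)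
lemma nu2: "nu \<theta> 2 = PL [(-1/2,[4])]"
  unfolding nu_PL by (rule PL_eqI) (simp add: ftilL_def PL_def Rm_all)
lemma nu3: "nu \<theta> 3 = PL [(1/2,[1])]"
  unfolding nu_PL by (rule PL_eqI) (simp add: ftilL_def PL_def Rm_all)
lemma nu4: "nu \<theta> 4 = PL [(-1/2,[2])]"
  unfolding nu_PL by (rule PL_eqI) (simp add: ftilL_def PL_def Rm_all)
lemma nu_out: "i \<notin> {1..4} \<Longrightarrow> nu \<theta> i = fzero"
  unfolding nu_def by (rule dA_out)

lemma PL_plus_apply: "PL a w + PL b w = PL (a @ b) w" by (simp add: PL_def)

lemmas nus = nu1 nu2 nu3 nu4 nu1[unfolded One_nat_def]

lemma dfS_PL: "dA \<theta> fS i = PL (dPL \<theta> i fSL)"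
  unfolding fS_PL by (rule dA_PL[OF fSL_words])

lemma dfS1: "dA \<theta> fS 1 = PL [(1/2,[3])]"
  unfolding dfS_PL by (rule PL_eqI) (simp add: fSL_def PL_def Rm_all)
lemma dfS2: "dA \<theta> fS 2 = PL [(1/2,[4])]"
  unfolding dfS_PL by (rule PL_eqI) (simp add: fSL_def PL_def Rm_all)
lemma dfS3: "dA \<theta> fS 3 = PL [(1/2,[1])]"
  unfolding dfS_PL by (rule PL_eqI) (simp add: fSL_def PL_def Rm_all)
lemma dfS4: "dA \<theta> fS 4 = PL [(1/2,[2])]"
  unfolding dfS_PL by (rule PL_eqI) (simp add: fSL_def PL_def Rm_all)
lemmas dfSs = dfS1 dfS2 dfS3 dfS4 dfS1[unfolded One_nat_def]

definition phi :: "om \<Rightarrow> fa" where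
  "phi \<omega> = fadd (fadd (fmul (\<omega> 1) (zg 1)) (fsmul (-1) (fmul (\<omega> 2) (zg 2))))
                 (fadd (fmul (\<omega> 3) (zg 3)) (fsmul (-1) (fmul (\<omega> 4) (zg 4))))"

lemma witL_JC: "\<forall>(c,u,g,v) \<in> set ws. g \<in> JC \<theta> \<and> set u \<subseteq> {1..4} \<and> set v \<subseteq> {1..4} \<Longrightarrow> witL ws \<in> JC \<theta>"
  unfolding JC_def by (rule witL_in)

lemma T1_eq: "fsub (ginv \<theta> (nu \<theta>) (nu \<theta>)) fone = witL
  [(((-1/4)), [1,3], relA \<theta> 3 1, []),
   (((-1/4)), [1], relA \<theta> 3 1, [3]),
   (((1/4) * cis \<theta> ^ 1), [1], relA \<theta> 4 3, [2]),
   (((1/4)), [1,3], relA \<theta> 4 2, []),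
   (((1/4)), [1], relA \<theta> 3 2, [4]),
   (((1/4) * cis \<theta> ^ 1), [], relA \<theta> 2 1, [4,3]),
   (((1/4)), [1,2], relA \<theta> 4 3, []),
   (((1/4) / cis \<theta> ^ 1), [2,3], relA \<theta> 4 1, []),
   (((1/4)), [2], relA \<theta> 3 1, [4]),
   (((1/4)), [], relA \<theta> 2 1, [3,4]),
   (((-1/4)), [2,4], relA \<theta> 4 2, []),
   (((-1/4)), [2], relA \<theta> 4 2, [4]),
   (((1/2)), [], relA \<theta> 3 1, []),
   (((-1/4)), [], relA \<theta> 3 1, [1,3]),
   (((-1/4)), [1], relA \<theta> 3 1, [3]),
   (((1/4) * cis \<theta> ^ 1), [], relA \<theta> 3 2, [1,4]),
   (((1/4)), [2], relA \<theta> 3 1, [4]),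
   (((1/4)), [], relA \<theta> 2 1, [3,4]),
   (((-1/4)), [3], relA \<theta> 3 1, [1]),
   (((-1/4)), [], relA \<theta> 3 1, [3,1]),
   (((-1/4)), [1,3], relA \<theta> 3 1, []),
   (((-1/4)), [1], relA \<theta> 3 1, [3]),
   (((1/4) / cis \<theta> ^ 1), [3], relA \<theta> 4 1, [2]),
   (((1/4)), [], relA \<theta> 3 1, [4,2]),
   (((1/4)), [1,3], relA \<theta> 4 2, []),
   (((1/4)), [1], relA \<theta> 3 2, [4]),
   (((1/4) / cis \<theta> ^ 1), [], relA \<theta> 4 1, [2,3]),
   (((1/4)), [1], relA \<theta> 4 2, [3]),
   (((1/4)), [1,2], relA \<theta> 4 3, []),
   (((1/2)), [], relA \<theta> 4 2, []),
   (((-1/4)), [], relA \<theta> 4 2, [2,4]),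
   (((-1/4)), [2], relA \<theta> 4 2, [4]),
   (((1/4) * cis \<theta> ^ 1), [], relA \<theta> 4 3, [2,1]),
   (((1/4)), [3], relA \<theta> 4 2, [1]),
   (((1/4)), [], relA \<theta> 3 2, [4,1]),
   (((1/4) / cis \<theta> ^ 1), [2,3], relA \<theta> 4 1, []),
   (((1/4)), [2], relA \<theta> 3 1, [4]),
   (((1/4)), [], relA \<theta> 2 1, [3,4]),
   (((-1/4)), [4], relA \<theta> 4 2, [2]),
   (((-1/4)), [], relA \<theta> 4 2, [4,2]),
   (((-1/4)), [2,4], relA \<theta> 4 2, []),
   (((-1/4)), [2], relA \<theta> 4 2, [4]),
   (((-1)), [2,4], fS, []),
   (((1)), [2,4], ftil, []),
   (((1/4)), [2], relA \<theta> 4 1, [3]),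
   (((1/4) * cis \<theta> ^ 1), [], relA \<theta> 2 1, [4,3]),
   (((1/4)), [1,2], relA \<theta> 4 3, []),
   (((3/4)), [2], relA \<theta> 4 2, [4]),
   (((-1/4)), [2], relA \<theta> 4 3, [1]),
   (((-1/4) / cis \<theta> ^ 1), [2,3], relA \<theta> 4 1, []),
   (((-1/4)), [2], relA \<theta> 3 1, [4]),
   (((-1/4)), [], relA \<theta> 2 1, [3,4]),
   (((1/4)), [2,4], relA \<theta> 4 2, []),
   (((1/4)), [2], relA \<theta> 4 2, [4]),
   (((2)), [2,4], fS, []),
   (((2)), [2,4], ftil, []),
   (((-3/2)), [2], relA \<theta> 4 1, [3]),
   (((-3/2) * cis \<theta> ^ 1), [], relA \<theta> 2 1, [4,3]),
   (((-3/2)), [1,2], relA \<theta> 4 3, []),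
   (((-1/2)), [2], relA \<theta> 4 2, [4]),
   (((-1/2)), [2], relA \<theta> 4 3, [1]),
   (((-1/2) / cis \<theta> ^ 1), [2,3], relA \<theta> 4 1, []),
   (((-1/2)), [2], relA \<theta> 3 1, [4]),
   (((-1/2)), [], relA \<theta> 2 1, [3,4]),
   (((1/2)), [2,4], relA \<theta> 4 2, []),
   (((1/2)), [2], relA \<theta> 4 2, [4]),
   (((-1)), [1,3], fS, []),
   (((-1)), [1,3], ftil, []),
   (((3/4)), [1], relA \<theta> 3 1, [3]),
   (((1/4)), [1], relA \<theta> 3 2, [4]),
   (((1/4)), [1,3], relA \<theta> 3 1, []),
   (((1/4)), [1], relA \<theta> 3 1, [3]),
   (((-1/4)), [1,3], relA \<theta> 4 2, []),
   (((-1/4)), [1], relA \<theta> 3 2, [4]),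
   (((3/2)), [], fS, []),
   (((-3/2)), [], ftil, []),
   (((3/8)), [], relA \<theta> 3 1, []),
   (((-3/8)), [], relA \<theta> 4 2, []),
   (((1/2)), [], fS, []),
   (((1/2)), [], ftil, []),
   (((-1/8)), [], relA \<theta> 3 1, []),
   (((1/8)), [], relA \<theta> 4 2, [])]"
  unfolding ginv_def atLeast1_4
  apply (simp add: nus dfSs PL_twist PL_mul PL_sub PL_smul PL_add zg_PL fone_PL gup_def Pm_def PL_plus_apply Rm_all witL_simps relA_def fS_PL ftil_PL fSL_def ftilL_def mono_PL oapp phi_def fzero_apply)
  apply (rule PL_eqI)
  apply (simp add: PL_def field_simps)
  done

lemma T1: "fsub (ginv \<theta> (nu \<theta>) (nu \<theta>)) fone \<in> JC \<theta>"
  unfolding T1_eq by (rule witL_JC) (simp add: relA_JC fS_JC ftil_JC)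

lemma T2_1_eq: "fadd (ginv \<theta> (dz 1) (nu \<theta>)) (fsmul ((-1) ^ 1) (zg 1)) = witL
  [(((1/2) * cis \<theta> ^ 1), [], relA \<theta> 2 1, [4]),
   (((-1/2)), [], relA \<theta> 3 1, [1]),
   (((-1/2)), [1], relA \<theta> 3 1, []),
   (((1/2) / cis \<theta> ^ 1), [], relA \<theta> 4 1, [2]),
   (((1/2)), [1], relA \<theta> 4 2, []),
   (((1)), [1], fS, []),
   (((-1)), [1], ftil, []),
   (((1/4)), [1], relA \<theta> 3 1, []),
   (((-1/4)), [1], relA \<theta> 4 2, []),
   (((-1)), [1], fS, []),
   (((-1)), [1], ftil, []),
   (((1/4)), [1], relA \<theta> 3 1, []),
   (((-1/4)), [1], relA \<theta> 4 2, [])]"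
  unfolding ginv_def atLeast1_4
  apply (simp add: nus dfSs PL_twist PL_mul PL_sub PL_smul PL_add zg_PL fone_PL gup_def Pm_def PL_plus_apply Rm_all witL_simps relA_def fS_PL ftil_PL fSL_def ftilL_def mono_PL oapp phi_def fzero_apply)
  apply (rule PL_eqI)
  apply (simp add: PL_def field_simps)
  done

lemma T2_1: "fadd (ginv \<theta> (dz 1) (nu \<theta>)) (fsmul ((-1) ^ 1) (zg 1)) \<in> JC \<theta>"
  unfolding T2_1_eq by (rule witL_JC) (simp add: relA_JC fS_JC ftil_JC)

lemma T2_2_eq: "fadd (ginv \<theta> (dz 2) (nu \<theta>)) (fsmul ((-1) ^ 2) (zg 2)) = witL
  [(((-1/2) * cis \<theta> ^ 1), [], relA \<theta> 3 2, [1]),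
   (((-1/2)), [2], relA \<theta> 3 1, []),
   (((-1/2)), [], relA \<theta> 2 1, [3]),
   (((1/2)), [], relA \<theta> 4 2, [2]),
   (((1/2)), [2], relA \<theta> 4 2, []),
   (((1)), [2], fS, []),
   (((-1)), [2], ftil, []),
   (((-1/4)), [], relA \<theta> 2 1, [3]),
   (((1/4)), [2], relA \<theta> 3 1, []),
   (((1/4)), [], relA \<theta> 2 1, [3]),
   (((-1/4)), [2], relA \<theta> 4 2, []),
   (((-1)), [2], fS, []),
   (((-1)), [2], ftil, []),
   (((3/4)), [], relA \<theta> 2 1, [3]),
   (((1/4)), [2], relA \<theta> 3 1, []),
   (((1/4)), [], relA \<theta> 2 1, [3]),
   (((-1/4)), [2], relA \<theta> 4 2, [])]"
  unfolding ginv_def atLeast1_4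
  apply (simp add: nus dfSs PL_twist PL_mul PL_sub PL_smul PL_add zg_PL fone_PL gup_def Pm_def PL_plus_apply Rm_all witL_simps relA_def fS_PL ftil_PL fSL_def ftilL_def mono_PL oapp phi_def fzero_apply)
  apply (rule PL_eqI)
  apply (simp add: PL_def field_simps)
  done

lemma T2_2: "fadd (ginv \<theta> (dz 2) (nu \<theta>)) (fsmul ((-1) ^ 2) (zg 2)) \<in> JC \<theta>"
  unfolding T2_2_eq by (rule witL_JC) (simp add: relA_JC fS_JC ftil_JC)

lemma T2_3_eq: "fadd (ginv \<theta> (dz 3) (nu \<theta>)) (fsmul ((-1) ^ 3) (zg 3)) = witL
  [(((-1/2)), [3], relA \<theta> 3 1, []),
   (((-1/2)), [], relA \<theta> 3 1, [3]),
   (((1/2) * cis \<theta> ^ 1), [], relA \<theta> 4 3, [2]),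
   (((1/2)), [3], relA \<theta> 4 2, []),
   (((1/2)), [], relA \<theta> 3 2, [4]),
   (((1)), [3], fS, []),
   (((-1)), [3], ftil, []),
   (((-1/4)), [], relA \<theta> 3 1, [3]),
   (((-3/4)), [], relA \<theta> 3 2, [4]),
   (((1/4)), [3], relA \<theta> 3 1, []),
   (((1/4)), [], relA \<theta> 3 1, [3]),
   (((-1/4)), [3], relA \<theta> 4 2, []),
   (((-1/4)), [], relA \<theta> 3 2, [4]),
   (((-1)), [3], fS, []),
   (((-1)), [3], ftil, []),
   (((3/4)), [], relA \<theta> 3 1, [3]),
   (((1/4)), [], relA \<theta> 3 2, [4]),
   (((1/4)), [3], relA \<theta> 3 1, []),
   (((1/4)), [], relA \<theta> 3 1, [3]),
   (((-1/4)), [3], relA \<theta> 4 2, []),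
   (((-1/4)), [], relA \<theta> 3 2, [4])]"
  unfolding ginv_def atLeast1_4
  apply (simp add: nus dfSs PL_twist PL_mul PL_sub PL_smul PL_add zg_PL fone_PL gup_def Pm_def PL_plus_apply Rm_all witL_simps relA_def fS_PL ftil_PL fSL_def ftilL_def mono_PL oapp phi_def fzero_apply)
  apply (rule PL_eqI)
  apply (simp add: PL_def field_simps)
  done

lemma T2_3: "fadd (ginv \<theta> (dz 3) (nu \<theta>)) (fsmul ((-1) ^ 3) (zg 3)) \<in> JC \<theta>"
  unfolding T2_3_eq by (rule witL_JC) (simp add: relA_JC fS_JC ftil_JC)

lemma T2_4_eq: "fadd (ginv \<theta> (dz 4) (nu \<theta>)) (fsmul ((-1) ^ 4) (zg 4)) = witL
  [(((-1/2) * cis \<theta> ^ 1), [1], relA \<theta> 4 3, []),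
   (((-1/2) / cis \<theta> ^ 1), [3], relA \<theta> 4 1, []),
   (((-1/2)), [], relA \<theta> 3 1, [4]),
   (((1/2)), [4], relA \<theta> 4 2, []),
   (((1/2)), [], relA \<theta> 4 2, [4]),
   (((1)), [4], fS, []),
   (((-1)), [4], ftil, []),
   (((-1/4)), [], relA \<theta> 4 1, [3]),
   (((-1/4) * cis \<theta> ^ 1), [1], relA \<theta> 4 3, []),
   (((-3/4)), [], relA \<theta> 4 2, [4]),
   (((1/4)), [], relA \<theta> 4 3, [1]),
   (((1/4) / cis \<theta> ^ 1), [3], relA \<theta> 4 1, []),
   (((1/4)), [], relA \<theta> 3 1, [4]),
   (((-1/4)), [4], relA \<theta> 4 2, []),
   (((-1/4)), [], relA \<theta> 4 2, [4]),
   (((-1)), [4], fS, []),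
   (((-1)), [4], ftil, []),
   (((3/4)), [], relA \<theta> 4 1, [3]),
   (((3/4) * cis \<theta> ^ 1), [1], relA \<theta> 4 3, []),
   (((1/4)), [], relA \<theta> 4 2, [4]),
   (((1/4)), [], relA \<theta> 4 3, [1]),
   (((1/4) / cis \<theta> ^ 1), [3], relA \<theta> 4 1, []),
   (((1/4)), [], relA \<theta> 3 1, [4]),
   (((-1/4)), [4], relA \<theta> 4 2, []),
   (((-1/4)), [], relA \<theta> 4 2, [4])]"
  unfolding ginv_def atLeast1_4
  apply (simp add: nus dfSs PL_twist PL_mul PL_sub PL_smul PL_add zg_PL fone_PL gup_def Pm_def PL_plus_apply Rm_all witL_simps relA_def fS_PL ftil_PL fSL_def ftilL_def mono_PL oapp phi_def fzero_apply)
  apply (rule PL_eqI)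
  apply (simp add: PL_def field_simps)
  done

lemma T2_4: "fadd (ginv \<theta> (dz 4) (nu \<theta>)) (fsmul ((-1) ^ 4) (zg 4)) \<in> JC \<theta>"
  unfolding T2_4_eq by (rule witL_JC) (simp add: relA_JC fS_JC ftil_JC)

lemma T3_eq: "fsub (phi (nu \<theta>)) fone = witL
  [(((1/2)), [], relA \<theta> 3 1, []),
   (((1/2)), [], relA \<theta> 4 2, []),
   (((1)), [], fS, []),
   (((-1)), [], ftil, []),
   (((1/4)), [], relA \<theta> 3 1, []),
   (((-1/4)), [], relA \<theta> 4 2, []),
   (((1)), [], fS, []),
   (((1)), [], ftil, []),
   (((-1/4)), [], relA \<theta> 3 1, []),
   (((1/4)), [], relA \<theta> 4 2, [])]"
  unfolding ginv_def atLeast1_4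
  apply (simp add: nus dfSs PL_twist PL_mul PL_sub PL_smul PL_add zg_PL fone_PL gup_def Pm_def PL_plus_apply Rm_all witL_simps relA_def fS_PL ftil_PL fSL_def ftilL_def mono_PL oapp phi_def fzero_apply)
  apply (rule PL_eqI)
  apply (simp add: PL_def field_simps)
  done

lemma T3: "fsub (phi (nu \<theta>)) fone \<in> JC \<theta>"
  unfolding T3_eq by (rule witL_JC) (simp add: relA_JC fS_JC ftil_JC)

lemma T4_eq: "phi (dA \<theta> fS) = witL
  [(((1/2)), [], relA \<theta> 3 1, []),
   (((-1/2)), [], relA \<theta> 4 2, []),
   (((-1)), [], fS, []),
   (((1)), [], ftil, []),
   (((-1/4)), [], relA \<theta> 3 1, []),
   (((1/4)), [], relA \<theta> 4 2, []),
   (((1)), [], fS, []),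
   (((1)), [], ftil, []),
   (((-1/4)), [], relA \<theta> 3 1, []),
   (((1/4)), [], relA \<theta> 4 2, [])]"
  unfolding phi_def dfSs
  apply (simp add: nus dfSs PL_twist PL_mul PL_sub PL_smul PL_add zg_PL fone_PL gup_def Pm_def PL_plus_apply Rm_all witL_simps relA_def fS_PL ftil_PL fSL_def ftilL_def mono_PL oapp phi_def fzero_apply)
  apply (rule PL_eqI)
  apply (simp add: PL_def field_simps)
  done

lemma T4: "phi (dA \<theta> fS) \<in> JC \<theta>"
  unfolding T4_eq by (rule witL_JC) (simp add: relA_JC fS_JC ftil_JC)

lemma relA_eq: "relA \<theta> a b = fsub (fmul (zg a) (zg b)) (fsmul (Rm \<theta> b a) (fmul (zg b) (zg a)))"
  by (simp add: relA_def zg_PL PL_mul PL_smul PL_sub)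

lemma cong_eq_trans: "x = x' \<Longrightarrow> fsub x' y \<in> J \<Longrightarrow> fsub x y \<in> J" by simp
lemma cong_trans_eq: "fsub x y' \<in> J \<Longrightarrow> y' = y \<Longrightarrow> fsub x y \<in> J" by simp

lemma L_mono:
  assumes i: "i \<in> {1..4}" and w: "set w \<subseteq> {1..4}"
  shows "fsub (fmul (zg i) (mono w)) (fmul (twist \<theta> i (mono w)) (zg i)) \<in> JB \<theta>"
  using w
proof (induction w)
  case Nil
  show ?case unfolding JB_def by (rule cong_eq) (simp add: fone_def[symmetric])
next
  case (Cons k w)
  then have k: "k \<in> {1..4}" and w: "set w \<subseteq> {1..4}" by auto
  define m where "m = mono w"
  have mFA: "m \<in> FA" using w by (simp add: m_def FA_mono)
  have IH: "fsub (fmul (zg i) m) (fmul (twist \<theta> i m) (zg i)) \<in> JB \<theta>" using Cons.IH[OF w] by (simp add: m_def)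
  have s1: "fsub (fmul (zg i) (mono (k#w))) (fmul (fsmul (Rm \<theta> k i) (fmul (zg k) (zg i))) m) \<in> JB \<theta>"
  proof -
    have "fsub (fmul (zg i) (mono (k#w))) (fmul (fsmul (Rm \<theta> k i) (fmul (zg k) (zg i))) m) = fmul (relA \<theta> i k) m"
      by (simp add: relA_eq mono_Cons m_def fmul_assoc fmul_fsub_left)
    then show ?thesis using relA_JB[OF i k] mFA by (simp add: JB_def ideal_gen.rmul)
  qed
  have s2: "fsub (fmul (fsmul (Rm \<theta> k i) (fmul (zg k) (zg i))) m) (fmul (fsmul (Rm \<theta> k i) (zg k)) (fmul (twist \<theta> i m) (zg i))) \<in> JB \<theta>"
  proof -
    have "fsub (fmul (fsmul (Rm \<theta> k i) (zg k)) (fmul (zg i) m)) (fmul (fsmul (Rm \<theta> k i) (zg k)) (fmul (twist \<theta> i m) (zg i))) \<in> JB \<theta>"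
      unfolding JB_def by (rule cong_lmul[OF IH[unfolded JB_def]], rule FA_fsmul, rule FA_zg[OF k])
    then show ?thesis by (simp add: fmul_assoc fmul_fsmul_left)
  qed
  have e3: "fmul (fsmul (Rm \<theta> k i) (zg k)) (fmul (twist \<theta> i m) (zg i)) = fmul (twist \<theta> i (mono (k#w))) (zg i)"
    by (simp add: mono_Cons m_def twist_fmul twist_zg fmul_assoc)
  show ?case
    using cong_trans[OF s1[unfolded JB_def] s2[unfolded JB_def]] e3 by (simp add: JB_def)
qed

lemma L:
  assumes i: "i \<in> {1..4}" and a: "a \<in> FA"
  shows "fsub (fmul (zg i) a) (fmul (twist \<theta> i a) (zg i)) \<in> JB \<theta>"
  using a
proof (induction rule: FA_induct)
  case zero then show ?case by (simp add: JB_def ideal_gen.zero)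
next
  case (add p q)
  have "fsub (fmul (zg i) (fadd p q)) (fmul (twist \<theta> i (fadd p q)) (zg i)) =
        fadd (fsub (fmul (zg i) p) (fmul (twist \<theta> i p) (zg i))) (fsub (fmul (zg i) q) (fmul (twist \<theta> i q) (zg i)))"
    by (rule ext) (simp add: fapp fmul_fadd_right fmul_fadd_left twist_fadd)
  then show ?case using add by (simp add: JB_def ideal_gen.add)
next
  case (mono c w)
  have "fsub (fmul (zg i) (fsmul c (mono w))) (fmul (twist \<theta> i (fsmul c (mono w))) (zg i)) =
        fsmul c (fsub (fmul (zg i) (mono w)) (fmul (twist \<theta> i (mono w)) (zg i)))"
    by (rule ext) (simp add: fapp fmul_fsmul_right fmul_fsmul_left twist_fsmul ring_distribs)
  then show ?case using L_mono[OF i mono] by (simp add: JB_def ideal_fsmul)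
qed

definition pr :: "nat \<Rightarrow> nat \<Rightarrow> bool" where
  "pr i j \<longleftrightarrow> (i,j) \<in> {(1,3),(3,1),(2,4),(4,2)}"

lemma pr_Rm: "pr i j \<Longrightarrow> x \<in> {1..4} \<Longrightarrow> Rm \<theta> x i * Rm \<theta> x j = 1"
  unfolding pr_def atLeast1_4 by (auto simp: Rm_all)

lemma pr_in: "pr i j \<Longrightarrow> i \<in> {1..4} \<and> j \<in> {1..4}"
  unfolding pr_def by auto

lemma pr_twist: "pr i j \<Longrightarrow> p \<in> FA \<Longrightarrow> twist \<theta> i (twist \<theta> j p) = p"
  by (rule twist_twist_id) (auto intro: pr_Rm)

lemma pr_comm:
  assumes "pr i j" "p \<in> FA"
  shows "fsub (fmul (fmul (zg i) (zg j)) p) (fmul p (fmul (zg i) (zg j))) \<in> JB \<theta>"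
proof -
  have i: "i \<in> {1..4}" and j: "j \<in> {1..4}" using pr_in[OF assms(1)] by auto
  have tFA: "twist \<theta> j p \<in> FA" using assms(2) by (rule FA_twist)
  have s1: "fsub (fmul (zg i) (fmul (zg j) p)) (fmul (zg i) (fmul (twist \<theta> j p) (zg j))) \<in> JB \<theta>"
    unfolding JB_def by (rule cong_lmul[OF L[OF j assms(2), unfolded JB_def] FA_zg[OF i]])
  have s2: "fsub (fmul (fmul (zg i) (twist \<theta> j p)) (zg j)) (fmul (fmul (twist \<theta> i (twist \<theta> j p)) (zg i)) (zg j)) \<in> JB \<theta>"
    unfolding JB_def by (rule cong_rmul[OF L[OF i tFA, unfolded JB_def] FA_zg[OF j]])
  have s2': "fsub (fmul (zg i) (fmul (twist \<theta> j p) (zg j))) (fmul (fmul (twist \<theta> i (twist \<theta> j p)) (zg i)) (zg j)) \<in> JB \<theta>"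
    using s2 by (simp add: fmul_assoc)
  have "fsub (fmul (fmul (zg i) (zg j)) p) (fmul (fmul (twist \<theta> i (twist \<theta> j p)) (zg i)) (zg j)) \<in> JB \<theta>"
    using cong_trans[OF s1[unfolded JB_def] s2'[unfolded JB_def]] by (simp add: JB_def fmul_assoc)
  then show ?thesis by (simp add: pr_twist[OF assms] fmul_assoc)
qed

definition commJ :: "fa set \<Rightarrow> fa \<Rightarrow> fa \<Rightarrow> bool" where
  "commJ J p x \<longleftrightarrow> fsub (fmul p x) (fmul x p) \<in> J"

lemma commJ_add: "commJ (ideal_gen G) p x \<Longrightarrow> commJ (ideal_gen G) p y \<Longrightarrow> commJ (ideal_gen G) p (fadd x y)"
proof -
  assume a: "commJ (ideal_gen G) p x" "commJ (ideal_gen G) p y"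
  have "fsub (fmul p (fadd x y)) (fmul (fadd x y) p) = fadd (fsub (fmul p x) (fmul x p)) (fsub (fmul p y) (fmul y p))"
    by (rule ext) (simp add: fapp fmul_fadd_left fmul_fadd_right)
  then show ?thesis using a by (simp add: commJ_def ideal_gen.add)
qed
lemma commJ_sub: "commJ (ideal_gen G) p x \<Longrightarrow> commJ (ideal_gen G) p y \<Longrightarrow> commJ (ideal_gen G) p (fsub x y)"
proof -
  assume a: "commJ (ideal_gen G) p x" "commJ (ideal_gen G) p y"
  have "fsub (fmul p (fsub x y)) (fmul (fsub x y) p) = fsub (fsub (fmul p x) (fmul x p)) (fsub (fmul p y) (fmul y p))"
    by (rule ext) (simp add: fapp fmul_fsub_left fmul_fsub_right)
  then show ?thesis using a by (simp add: commJ_def ideal_fsub)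
qed
lemma commJ_smul: "commJ (ideal_gen G) p x \<Longrightarrow> commJ (ideal_gen G) p (fsmul c x)"
proof -
  assume a: "commJ (ideal_gen G) p x"
  have "fsub (fmul p (fsmul c x)) (fmul (fsmul c x) p) = fsmul c (fsub (fmul p x) (fmul x p))"
    by (rule ext) (simp add: fapp fmul_fsmul_left fmul_fsmul_right ring_distribs)
  then show ?thesis using a by (simp add: commJ_def ideal_fsmul)
qed

lemma ftil_expr: "ftil = fsmul (1/4) (fsub (fadd (fmul (zg 1) (zg 3)) (fmul (zg 3) (zg 1))) (fadd (fmul (zg 2) (zg 4)) (fmul (zg 4) (zg 2))))"
  unfolding ftil_PL by (simp add: zg_PL PL_mul PL_add PL_sub PL_smul) (rule PL_eqI, simp add: PL_def ftilL_def)

lemma claim1: "p \<in> FA \<Longrightarrow> fsub (fmul p ftil) (fmul ftil p) \<in> JB \<theta>"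
proof -
  assume p: "p \<in> FA"
  have c: "commJ (JB \<theta>) p (fmul (zg i) (zg j))" if "pr i j" for i j
    using cong_sym[OF pr_comm[OF that p, unfolded JB_def]] by (simp add: commJ_def JB_def)
  have "commJ (JB \<theta>) p ftil"
    unfolding ftil_expr JB_def
    by (intro commJ_smul commJ_sub commJ_add c[unfolded JB_def]) (simp_all add: pr_def)
  then show ?thesis by (simp add: commJ_def)
qed

lemma nu_zg: "nu \<theta> 1 = fsmul (1/2) (zg 3)" "nu \<theta> 2 = fsmul (-1/2) (zg 4)"
  "nu \<theta> 3 = fsmul (1/2) (zg 1)" "nu \<theta> 4 = fsmul (-1/2) (zg 2)"
  by (simp_all add: nus PL_single zg_def)

lemmas nu_zgS = nu_zg(1)[unfolded One_nat_def]

lemma nu_FA4: "nu \<theta> \<in> FA4"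
  unfolding nu_def by (rule FA4_dA[OF ftil_FA])

lemma comp_MB:
  assumes "\<And>j. j \<in> {1..4} \<Longrightarrow> \<omega> j \<in> JB \<theta>" "\<And>j. j \<notin> {1..4} \<Longrightarrow> \<omega> j = fzero"
  shows "\<omega> \<in> MB \<theta>"
proof -
  have e: "\<omega> = oadd (oadd (olmul (\<omega> 1) (dz 1)) (olmul (\<omega> 2) (dz 2))) (oadd (olmul (\<omega> 3) (dz 3)) (olmul (\<omega> 4) (dz 4)))"
  proof (rule ext)
    fix j
    show "\<omega> j = oadd (oadd (olmul (\<omega> 1) (dz 1)) (olmul (\<omega> 2) (dz 2))) (oadd (olmul (\<omega> 3) (dz 3)) (olmul (\<omega> 4) (dz 4))) j"
    proof (cases "j \<in> {1..4}")
      case True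
      then have "j = 1 \<or> j = 2 \<or> j = 3 \<or> j = 4" by auto
      then show ?thesis by (elim disjE) (simp_all add: oapp)
    next
      case False
      then have "j \<noteq> 1" "j \<noteq> 2" "j \<noteq> 3" "j \<noteq> 4" by auto
      then show ?thesis using assms(2)[OF False] by (simp add: oapp)
    qed
  qed
  have m: "olmul (\<omega> j) (dz j) \<in> MB \<theta>" if "j \<in> {1..4}" for j
    by (rule qrelB_MB(1)[OF assms(1)[OF that] FA4_dz[OF that]])
  have mm: "olmul (\<omega> j) (dz j) \<in> bimod_gen \<theta> (qrel \<theta> (JB \<theta>) \<union> {dA \<theta> fS})" if "j \<in> {1..4}" for j
    using m[OF that] unfolding MB_def .
  show ?thesis
    unfolding MB_def by (subst e) (rule bimod_gen.add; rule bimod_gen.add; rule mm; simp)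
qed

lemma claim3_comp:
  assumes p: "p \<in> FA" and j: "j \<in> {1..4}"
  shows "fsub (fmul p (nu \<theta> j)) (fmul (nu \<theta> j) (twist \<theta> j p)) \<in> JB \<theta>"
proof -
  obtain c s where nj: "nu \<theta> j = fsmul c (zg s)" and ps: "pr s j"
    using j nu_zg[of \<theta>] unfolding pr_def atLeast1_4 by auto
  have s: "s \<in> {1..4}" using pr_in[OF ps] by simp
  have tFA: "twist \<theta> j p \<in> FA" using p by (rule FA_twist)
  have "fsub (fmul (zg s) (twist \<theta> j p)) (fmul p (zg s)) \<in> JB \<theta>"
    using L[OF s tFA, of \<theta>] by (simp add: pr_twist[OF ps p])
  then have "fsub (fmul p (zg s)) (fmul (zg s) (twist \<theta> j p)) \<in> JB \<theta>"
    unfolding JB_def by (rule cong_sym)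
  then have "fsub (fsmul c (fmul p (zg s))) (fsmul c (fmul (zg s) (twist \<theta> j p))) \<in> JB \<theta>"
    unfolding JB_def by (rule cong_smul)
  then show ?thesis by (simp add: nj fmul_fsmul_left fmul_fsmul_right)
qed

lemma claim3: "p \<in> FA \<Longrightarrow> osub (olmul p (nu \<theta>)) (ormul \<theta> (nu \<theta>) p) \<in> MB \<theta>"
  by (rule comp_MB) (simp_all add: oapp claim3_comp nu_out)

lemma sum14: "(\<Sum>i\<in>{1..4::nat}. f i) = f 1 + f 2 + f 3 + f 4"
  unfolding atLeast1_4 by (simp add: add.assoc)

lemmas sum14S = sum14[unfolded One_nat_def]

lemma claim2: "osub (nu \<theta>) (\<lambda>j. \<lambda>w. \<Sum>i\<in>{1..4}. hlow i j * zg i w) \<in> MB \<theta>"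
proof -
  have "osub (nu \<theta>) (\<lambda>j. \<lambda>w. \<Sum>i\<in>{1..4}. hlow i j * zg i w) = ozero"
  proof (rule ext)
    fix j
    show "osub (nu \<theta>) (\<lambda>j. \<lambda>w. \<Sum>i\<in>{1..4}. hlow i j * zg i w) j = ozero j"
    proof (cases "j \<in> {1..4}")
      case True
      then have "j = 1 \<or> j = 2 \<or> j = 3 \<or> j = 4" by auto
      then show ?thesis
        by (elim disjE) (simp_all add: oapp fun_eq_iff fapp nu_zg nu_zgS sum14 sum14S hlow_def Qm_def zg_def mono_apply)
    next
      case False
      then have "hlow i j = 0" for i by (auto simp: hlow_def Qm_def)
      then show ?thesis using False by (simp add: oapp nu_out fun_eq_iff fapp)
    qed
  qed
  then show ?thesis unfolding MB_def by (simp add: bimod_gen.zero)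
qed

lemma JB_JC: "x \<in> JB \<theta> \<Longrightarrow> x \<in> JC \<theta>" using JB_sub_JC by blast

lemma phi_olmul: "phi (olmul a \<omega>) = fmul a (phi \<omega>)"
  by (simp add: phi_def oapp fmul_assoc fmul_fadd_right fmul_fsmul_right)

lemma phi_oadd: "phi (oadd x y) = fadd (phi x) (phi y)"
  by (rule ext) (simp add: phi_def oapp fapp fmul_fadd_left fmul_fsmul_left ring_distribs)

lemma phi_ozero: "phi ozero = fzero"
  by (simp add: phi_def oapp)

lemma phi_FA: "\<omega> \<in> FA4 \<Longrightarrow> phi \<omega> \<in> FA"
  unfolding phi_def by (intro FA_fadd FA_fsmul FA_fmul FA4D(1) FA_zg) auto

lemma phi_term:
  assumes i: "i \<in> {1..4}" and x: "x \<in> FA" and a: "a \<in> FA"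
  shows "fsub (fmul (fmul x (twist \<theta> i a)) (zg i)) (fmul (fmul x (zg i)) a) \<in> JB \<theta>"
proof -
  have "fsub (fmul (twist \<theta> i a) (zg i)) (fmul (zg i) a) \<in> JB \<theta>"
    using L[OF i a, of \<theta>] unfolding JB_def by (rule cong_sym)
  then have "fsub (fmul x (fmul (twist \<theta> i a) (zg i))) (fmul x (fmul (zg i) a)) \<in> JB \<theta>"
    unfolding JB_def using x by (rule cong_lmul)
  then show ?thesis by (simp add: fmul_assoc)
qed

lemma phi_ormul:
  assumes x: "\<omega> \<in> FA4" and a: "a \<in> FA"
  shows "fsub (phi (ormul \<theta> \<omega> a)) (fmul (phi \<omega>) a) \<in> JB \<theta>"
proof -
  have t: "fsub (fmul (fmul (\<omega> i) (twist \<theta> i a)) (zg i)) (fmul (fmul (\<omega> i) (zg i)) a) \<in> ideal_gen (relsA \<theta> \<union> {fS})"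
    if "i \<in> {1..4}" for i
    using phi_term[OF that FA4D(1)[OF x] a] unfolding JB_def .
  have e: "fmul (phi \<omega>) a = fadd (fadd (fmul (fmul (\<omega> 1) (zg 1)) a) (fsmul (-1) (fmul (fmul (\<omega> 2) (zg 2)) a)))
                 (fadd (fmul (fmul (\<omega> 3) (zg 3)) a) (fsmul (-1) (fmul (fmul (\<omega> 4) (zg 4)) a)))"
    by (simp add: phi_def fmul_fadd_left fmul_fsmul_left)
  show ?thesis
    unfolding e unfolding phi_def oapp JB_def
    by (intro cong_add cong_smul t) auto
qed

lemma MB_phi: "\<omega> \<in> MB \<theta> \<Longrightarrow> \<omega> \<in> FA4 \<and> phi \<omega> \<in> JC \<theta>"
  unfolding MB_def
proof (induction rule: bimod_gen.induct)
  case (gen x)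
  then show ?case
  proof
    assume "x \<in> qrel \<theta> (JB \<theta>)"
    then obtain p \<omega> where p: "p \<in> JB \<theta>" and w: "\<omega> \<in> FA4" and
      x: "x = olmul p \<omega> \<or> x = ormul \<theta> \<omega> p" unfolding qrel_def by blast
    have pFA: "p \<in> FA" using p JB_FA by blast
    from x show ?thesis
    proof
      assume x: "x = olmul p \<omega>"
      have "fmul p (phi \<omega>) \<in> JB \<theta>" unfolding JB_def
        by (rule ideal_gen.rmul[OF p[unfolded JB_def] phi_FA[OF w]])
      then show ?thesis using x by (simp add: FA4_olmul[OF pFA w] phi_olmul JB_JC)
    next
      assume x: "x = ormul \<theta> \<omega> p"
      have "fmul (phi \<omega>) p \<in> JB \<theta>" unfolding JB_def
        by (rule ideal_gen.lmul[OF p[unfolded JB_def] phi_FA[OF w]])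
      then have "phi x \<in> JB \<theta>" using phi_ormul[OF w pFA, of \<theta>] x unfolding JB_def
        by (metis ideal_sum_mem)
      then show ?thesis using x by (simp add: FA4_ormul[OF pFA w] JB_JC)
    qed
  next
    assume "x \<in> {dA \<theta> fS}"
    then show ?thesis using FA4_dA[OF fS_FA] T4 by auto
  qed
next
  case zero then show ?case by (simp add: FA4_ozero phi_ozero JC_def ideal_gen.zero)
next
  case (add x y) then show ?case by (simp add: FA4_oadd phi_oadd JC_def ideal_gen.add)
next
  case (lmul x a) then show ?case by (simp add: FA4_olmul phi_olmul JC_def ideal_gen.lmul)
next
  case (rmul x a)
  then have xw: "x \<in> FA4" and px: "phi x \<in> JC \<theta>" and aFA: "a \<in> FA" by auto
  have "fmul (phi x) a \<in> JC \<theta>" using px aFA unfolding JC_def by (rule ideal_gen.rmul)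
  then have "phi (ormul \<theta> x a) \<in> JC \<theta>"
    using JB_JC[OF phi_ormul[OF xw aFA, of \<theta>]] unfolding JC_def by (metis ideal_sum_mem)
  then show ?case by (simp add: FA4_ormul[OF aFA xw])
qed

lemma MC_phi: "\<omega> \<in> MC \<theta> \<Longrightarrow> \<omega> \<in> FA4 \<and> phi \<omega> \<in> JC \<theta>"
  unfolding MC_def
proof (induction rule: bimod_gen.induct)
  case (gen x)
  then show ?case
  proof
    assume "x \<in> MB \<theta>" then show ?thesis by (rule MB_phi)
  next
    assume "x \<in> qrel \<theta> (JC \<theta>)"
    then obtain p \<omega> where p: "p \<in> JC \<theta>" and w: "\<omega> \<in> FA4" and
      x: "x = olmul p \<omega> \<or> x = ormul \<theta> \<omega> p" unfolding qrel_def by blast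
    have pFA: "p \<in> FA" using p JC_FA by blast
    from x show ?thesis
    proof
      assume x: "x = olmul p \<omega>"
      have "fmul p (phi \<omega>) \<in> JC \<theta>" unfolding JC_def
        by (rule ideal_gen.rmul[OF p[unfolded JC_def] phi_FA[OF w]])
      then show ?thesis using x by (simp add: FA4_olmul[OF pFA w] phi_olmul)
    next
      assume x: "x = ormul \<theta> \<omega> p"
      have "fmul (phi \<omega>) p \<in> JC \<theta>" unfolding JC_def
        by (rule ideal_gen.lmul[OF p[unfolded JC_def] phi_FA[OF w]])
      then have "phi x \<in> JC \<theta>" using JB_JC[OF phi_ormul[OF w pFA, of \<theta>]] x unfolding JC_def
        by (metis ideal_sum_mem)
      then show ?thesis using x by (simp add: FA4_ormul[OF pFA w])
    qed
  qed
next
  case zero then show ?case by (simp add: FA4_ozero phi_ozero JC_def ideal_gen.zero)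
next
  case (add x y) then show ?case by (simp add: FA4_oadd phi_oadd JC_def ideal_gen.add)
next
  case (lmul x a) then show ?case by (simp add: FA4_olmul phi_olmul JC_def ideal_gen.lmul)
next
  case (rmul x a)
  then have xw: "x \<in> FA4" and px: "phi x \<in> JC \<theta>" and aFA: "a \<in> FA" by auto
  have "fmul (phi x) a \<in> JC \<theta>" using px aFA unfolding JC_def by (rule ideal_gen.rmul)
  then have "phi (ormul \<theta> x a) \<in> JC \<theta>"
    using JB_JC[OF phi_ormul[OF xw aFA, of \<theta>]] unfolding JC_def by (metis ideal_sum_mem)
  then show ?case by (simp add: FA4_ormul[OF aFA xw])
qed

lemma freeness: "c \<in> FA \<Longrightarrow> olmul c (nu \<theta>) \<in> MC \<theta> \<Longrightarrow> c \<in> JC \<theta>"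
proof -
  assume c: "c \<in> FA" and m: "olmul c (nu \<theta>) \<in> MC \<theta>"
  have a: "fmul c (phi (nu \<theta>)) \<in> JC \<theta>" using MC_phi[OF m] by (simp add: phi_olmul)
  have b: "fmul c (fsub (phi (nu \<theta>)) fone) \<in> JC \<theta>"
    using ideal_gen.lmul[OF T3[unfolded JC_def] c] unfolding JC_def .
  have "c = fsub (fmul c (phi (nu \<theta>))) (fmul c (fsub (phi (nu \<theta>)) fone))"
    by (rule ext) (simp add: fapp fmul_fsub_right)
  then show ?thesis using a b unfolding JC_def by (metis ideal_fsub)
qed

lemma PL_zeroI: "\<forall>w \<in> set (map snd xs). PL xs w = 0 \<Longrightarrow> PL xs = fzero"
proof -
  assume a: "\<forall>w \<in> set (map snd xs). PL xs w = 0"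
  have "PL xs = PL []" by (rule PL_eqI) (use a in \<open>simp add: PL_def\<close>)
  then show ?thesis by (simp add: PL_Nil)
qed

lemma PL_fzero_iff: "PL xs = fzero \<longleftrightarrow> (\<forall>w \<in> set (map snd xs). PL xs w = 0)"
  using PL_zeroI by (auto simp: fzero_apply)

lemma allrel: "\<forall>i\<in>{1..4}. \<forall>j\<in>{1..4}. \<forall>k\<in>{1..4}. PL (dPL \<theta> k [(1,[i,j]), (- Rm \<theta> j i, [j,i])]) = fzero"
  unfolding atLeast1_4 PL_fzero_iff by (simp add: PL_def Rm_all)

lemma d_relA_comp:
  assumes i: "i \<in> {1..4}" and j: "j \<in> {1..4}" and k: "k \<in> {1..4}"
  shows "dA \<theta> (relA \<theta> i j) k = fzero"
proof -
  have w: "\<forall>(c,u)\<in>set [(1::complex,[i,j]), (- Rm \<theta> j i, [j,i])]. set u \<subseteq> {1..4}" using i j by auto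
  have "dA \<theta> (relA \<theta> i j) k = PL (dPL \<theta> k [(1,[i,j]), (- Rm \<theta> j i, [j,i])])"
    unfolding relA_def by (rule dA_PL[OF w])
  also have "\<dots> = fzero" using allrel i j k by blast
  finally show ?thesis .
qed

lemma d_relA: "i \<in> {1..4} \<Longrightarrow> j \<in> {1..4} \<Longrightarrow> dA \<theta> (relA \<theta> i j) = ozero"
  by (rule ext) (case_tac "x \<in> {1..4}", simp_all add: d_relA_comp dA_out oapp)

lemma relsA_relA: "a \<in> relsA \<theta> \<Longrightarrow> \<exists>i j. i \<in> {1..4} \<and> j \<in> {1..4} \<and> a = relA \<theta> i j"
  unfolding relsA_def relA_eq by blast

lemma bimod_neg: "osub x y \<in> bimod_gen \<theta> S \<Longrightarrow> osub y x \<in> bimod_gen \<theta> S"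
proof -
  assume a: "osub x y \<in> bimod_gen \<theta> S"
  have "osub y x = olmul (fsmul (-1) fone) (osub x y)"
    by (rule ext)+ (simp add: oapp fapp fmul_fsmul_left)
  then show ?thesis using a by (simp add: bimod_gen.lmul FA_fsmul)
qed

lemma central_MC:
  assumes c: "c \<in> FA" and a: "a \<in> FA"
  shows "osub (ormul \<theta> (olmul c (nu \<theta>)) a) (olmul (fmul c a) (nu \<theta>)) \<in> MC \<theta>"
proof -
  have "osub (ormul \<theta> (nu \<theta>) a) (olmul a (nu \<theta>)) \<in> MB \<theta>"
    using claim3[OF a, of \<theta>] unfolding MB_def by (rule bimod_neg)
  then have "olmul c (osub (ormul \<theta> (nu \<theta>) a) (olmul a (nu \<theta>))) \<in> MB \<theta>"
    unfolding MB_def using c by (rule bimod_gen.lmul)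
  then show ?thesis
    by (intro MB_MC) (simp add: ormul_olmul olmul_osub olmul_olmul)
qed

lemma MC_add: "x \<in> MC \<theta> \<Longrightarrow> y \<in> MC \<theta> \<Longrightarrow> oadd x y \<in> MC \<theta>"
  unfolding MC_def by (rule bimod_gen.add)
lemma MC_lmul: "x \<in> MC \<theta> \<Longrightarrow> a \<in> FA \<Longrightarrow> olmul a x \<in> MC \<theta>"
  unfolding MC_def by (rule bimod_gen.lmul)
lemma MC_rmul: "x \<in> MC \<theta> \<Longrightarrow> a \<in> FA \<Longrightarrow> ormul \<theta> x a \<in> MC \<theta>"
  unfolding MC_def by (rule bimod_gen.rmul)
lemma MC_zero: "ozero \<in> MC \<theta>"
  unfolding MC_def by (rule bimod_gen.zero)

lemma JC_d: "a \<in> JC \<theta> \<Longrightarrow> \<exists>c\<in>FA. osub (dA \<theta> a) (olmul c (nu \<theta>)) \<in> MC \<theta>"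
  unfolding JC_def
proof (induction rule: ideal_gen.induct)
  case (gen p)
  then consider "p \<in> relsA \<theta>" | "p = fS" | "p = ftil" by blast
  then show ?case
  proof cases
    case 1
    then obtain i j where "i \<in> {1..4}" "j \<in> {1..4}" "p = relA \<theta> i j" using relsA_relA by blast
    then have "dA \<theta> p = ozero" by (simp add: d_relA)
    then show ?thesis by (intro bexI[of _ fzero]) (simp_all add: olmul_fzero osub_ozero MC_zero)
  next
    case 2
    then show ?thesis by (intro bexI[of _ fzero]) (simp_all add: olmul_fzero osub_ozero MB_MC dfS_MB)
  next
    case 3
    have "osub (nu \<theta>) (olmul fone (nu \<theta>)) = ozero" by (rule ext) (simp add: oapp)
    then show ?thesis using 3 by (intro bexI[of _ fone]) (simp_all add: nu_def[symmetric] MC_zero)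
  qed
next
  case zero
  then show ?case by (intro bexI[of _ fzero]) (simp_all add: dA_fzero olmul_fzero osub_ozero MC_zero)
next
  case (add p q)
  then obtain c1 c2 where c1: "c1 \<in> FA" "osub (dA \<theta> p) (olmul c1 (nu \<theta>)) \<in> MC \<theta>"
    and c2: "c2 \<in> FA" "osub (dA \<theta> q) (olmul c2 (nu \<theta>)) \<in> MC \<theta>" by blast
  have "osub (dA \<theta> (fadd p q)) (olmul (fadd c1 c2) (nu \<theta>)) =
        oadd (osub (dA \<theta> p) (olmul c1 (nu \<theta>))) (osub (dA \<theta> q) (olmul c2 (nu \<theta>)))"
    by (rule ext)+ (simp add: dA_fadd oapp fapp fmul_fadd_left)
  then show ?case using c1 c2 by (intro bexI[of _ "fadd c1 c2"]) (simp_all add: MC_add FA_fadd)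
next
  case (lmul p a)
  then obtain c where c: "c \<in> FA" "osub (dA \<theta> p) (olmul c (nu \<theta>)) \<in> MC \<theta>" by blast
  have pJC: "p \<in> JC \<theta>" using lmul(1) unfolding JC_def .
  have "osub (dA \<theta> (fmul a p)) (olmul (fmul a c) (nu \<theta>)) =
        oadd (olmul a (osub (dA \<theta> p) (olmul c (nu \<theta>)))) (ormul \<theta> (dA \<theta> a) p)"
    by (rule ext)+ (simp add: leibniz oapp fapp fmul_fsub_right fmul_assoc)
  moreover have "ormul \<theta> (dA \<theta> a) p \<in> MC \<theta>"
    by (rule qrelC_MC(2)[OF pJC FA4_dA[OF lmul(2)]])
  ultimately show ?case using c lmul(2)
    by (intro bexI[of _ "fmul a c"]) (simp_all add: MC_add MC_lmul FA_fmul)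
next
  case (rmul p a)
  then obtain c where c: "c \<in> FA" "osub (dA \<theta> p) (olmul c (nu \<theta>)) \<in> MC \<theta>" by blast
  have pJC: "p \<in> JC \<theta>" using rmul(1) unfolding JC_def .
  have "osub (dA \<theta> (fmul p a)) (olmul (fmul c a) (nu \<theta>)) =
        oadd (olmul p (dA \<theta> a))
          (oadd (ormul \<theta> (osub (dA \<theta> p) (olmul c (nu \<theta>))) a)
                (osub (ormul \<theta> (olmul c (nu \<theta>)) a) (olmul (fmul c a) (nu \<theta>))))"
    by (rule ext)+ (simp add: leibniz oapp fapp fmul_fsub_left fmul_assoc)
  moreover have "olmul p (dA \<theta> a) \<in> MC \<theta>"
    by (rule qrelC_MC(1)[OF pJC FA4_dA[OF rmul(2)]])
  ultimately show ?case using c rmul(2) central_MC[OF c(1) rmul(2), of \<theta>]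
    by (intro bexI[of _ "fmul c a"]) (simp_all add: MC_add MC_rmul FA_fmul)
qed

lemma NC_span: "n \<in> NC \<theta> \<Longrightarrow> \<exists>c\<in>FA. osub n (olmul c (nu \<theta>)) \<in> MC \<theta>"
  unfolding NC_def
proof (induction rule: bimod_gen.induct)
  case (gen x)
  then show ?case
  proof
    assume "x \<in> MC \<theta>"
    then show ?thesis by (intro bexI[of _ fzero]) (simp_all add: olmul_fzero osub_ozero)
  next
    assume "x \<in> {dA \<theta> a |a. a \<in> JC \<theta>}"
    then show ?thesis using JC_d by blast
  qed
next
  case zero
  have "osub ozero (olmul fzero (nu \<theta>)) = ozero" by (rule ext) (simp add: oapp)
  then show ?case by (intro bexI[of _ fzero]) (simp_all add: MC_zero)
next
  case (add x y)
  then obtain c1 c2 where c1: "c1 \<in> FA" "osub x (olmul c1 (nu \<theta>)) \<in> MC \<theta>"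
    and c2: "c2 \<in> FA" "osub y (olmul c2 (nu \<theta>)) \<in> MC \<theta>" by blast
  have "osub (oadd x y) (olmul (fadd c1 c2) (nu \<theta>)) =
        oadd (osub x (olmul c1 (nu \<theta>))) (osub y (olmul c2 (nu \<theta>)))"
    by (rule ext)+ (simp add: oapp fapp fmul_fadd_left)
  then show ?case using c1 c2 by (intro bexI[of _ "fadd c1 c2"]) (simp_all add: MC_add FA_fadd)
next
  case (lmul x a)
  then obtain c where c: "c \<in> FA" "osub x (olmul c (nu \<theta>)) \<in> MC \<theta>" by blast
  have "osub (olmul a x) (olmul (fmul a c) (nu \<theta>)) = olmul a (osub x (olmul c (nu \<theta>)))"
    by (simp add: olmul_osub olmul_olmul)
  then show ?case using c lmul(2) by (intro bexI[of _ "fmul a c"]) (simp_all add: MC_lmul FA_fmul)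
next
  case (rmul x a)
  then obtain c where c: "c \<in> FA" "osub x (olmul c (nu \<theta>)) \<in> MC \<theta>" by blast
  have "osub (ormul \<theta> x a) (olmul (fmul c a) (nu \<theta>)) =
        oadd (ormul \<theta> (osub x (olmul c (nu \<theta>))) a) (osub (ormul \<theta> (olmul c (nu \<theta>)) a) (olmul (fmul c a) (nu \<theta>)))"
    by (rule ext)+ (simp add: oapp fapp fmul_fsub_left)
  then show ?case using c rmul(2) central_MC[OF c(1) rmul(2), of \<theta>]
    by (intro bexI[of _ "fmul c a"]) (simp_all add: MC_add MC_rmul FA_fmul)
qed

lemma proj_eq: "osub (Pi_proj \<theta> (dz i)) (oadd (dz i) (olmul (fsmul ((-1) ^ i) (zg i)) (nu \<theta>)))
   = olmul (fsmul (-1) (fadd (ginv \<theta> (dz i) (nu \<theta>)) (fsmul ((-1) ^ i) (zg i)))) (nu \<theta>)"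
  unfolding Pi_proj_def
  by (rule ext)+ (simp add: oapp fapp fmul_fadd_left fmul_fsmul_left ring_distribs)

lemma projector: "i \<in> {1..4} \<Longrightarrow> osub (Pi_proj \<theta> (dz i)) (oadd (dz i) (olmul (fsmul ((-1) ^ i) (zg i)) (nu \<theta>))) \<in> MC \<theta>"
proof -
  assume i: "i \<in> {1..4}"
  have "fadd (ginv \<theta> (dz i) (nu \<theta>)) (fsmul ((-1) ^ i) (zg i)) \<in> JC \<theta>"
  proof -
    have "i = 1 \<or> i = 2 \<or> i = 3 \<or> i = 4" using i by auto
    then show ?thesis using T2_1 T2_2 T2_3 T2_4 by (elim disjE) simp_all
  qed
  then have "fsmul (-1) (fadd (ginv \<theta> (dz i) (nu \<theta>)) (fsmul ((-1) ^ i) (zg i))) \<in> JC \<theta>"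
    unfolding JC_def by (rule ideal_fsmul)
  then show ?thesis unfolding proj_eq by (rule qrelC_MC(1)[OF _ nu_FA4])
qed

lemma nu_NC: "nu \<theta> \<in> NC \<theta>"
  unfolding NC_def nu_def by (rule bimod_gen.gen) (use ftil_JC in blast)

theorem proposition4p13:
  fixes \<theta> :: real
  shows "(\<forall>p\<in>FA. fsub (fmul p ftil) (fmul ftil p) \<in> JB \<theta>)
       \<and> osub (nu \<theta>) (\<lambda>j. \<lambda>w. \<Sum>i\<in>{1..4}. hlow i j * zg i w) \<in> MB \<theta>
       \<and> (\<forall>p\<in>FA. osub (olmul p (nu \<theta>)) (ormul \<theta> (nu \<theta>) p) \<in> MB \<theta>)
       \<and> fsub (ginv \<theta> (nu \<theta>) (nu \<theta>)) fone \<in> JC \<theta>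
       \<and> nc_hypersurface_basis \<theta> (nu \<theta>)
       \<and> (\<forall>i\<in>{1..4}. osub (Pi_proj \<theta> (dz i))
              (oadd (dz i) (olmul (fsmul ((-1) ^ i) (zg i)) (nu \<theta>))) \<in> MC \<theta>)"
proof -
  have h: "nc_hypersurface_basis \<theta> (nu \<theta>)"
    unfolding nc_hypersurface_basis_def
  proof (intro conjI ballI impI)
    show "nu \<theta> \<in> FA4" by (rule nu_FA4)
    show "fsub (ginv \<theta> (nu \<theta>) (nu \<theta>)) fone \<in> JC \<theta>" by (rule T1)
    show "nu \<theta> \<in> NC \<theta>" by (rule nu_NC)
    fix p assume "p \<in> FA"
    then show "osub (olmul p (nu \<theta>)) (ormul \<theta> (nu \<theta>) p) \<in> MB \<theta>" by (rule claim3)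
  next
    fix n assume "n \<in> NC \<theta>"
    then show "\<exists>c\<in>FA. osub n (olmul c (nu \<theta>)) \<in> MC \<theta>" by (rule NC_span)
  next
    fix c assume "c \<in> FA" "olmul c (nu \<theta>) \<in> MC \<theta>"
    then show "c \<in> JC \<theta>" by (rule freeness)
  qed
  have a: "\<forall>p\<in>FA. fsub (fmul p ftil) (fmul ftil p) \<in> JB \<theta>" using claim1 by blast
  have b: "\<forall>p\<in>FA. osub (olmul p (nu \<theta>)) (ormul \<theta> (nu \<theta>) p) \<in> MB \<theta>" using claim3 by blast
  have c: "\<forall>i\<in>{1..4}. osub (Pi_proj \<theta> (dz i))
              (oadd (dz i) (olmul (fsmul ((-1) ^ i) (zg i)) (nu \<theta>))) \<in> MC \<theta>" using projector by blast
  show ?thesis using a claim2 b T1 h c by (intro conjI)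
qed

end
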